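(* Let $n\ge2$ and $m=\lfloor (n-1)/2\rfloor$. Then \[R_n^{D,>}(x)=(1+x)^m\sum_{T\in\widetilde{\mathcal{DHR}}_n^+}x^{\max(T)+1},\qquad R_n^{D,<}(x)=(1+x)^m\sum_{T\in\widetilde{\mathcal{DHR}}_n^-}x^{\min(T)+1},\] and hence $R_n^{D}(x)$ is $(1+x)^m$ times the sum of these two tree sums, where $\max(T)$ (resp. $\min(T)$) is the number of inner nodes of $T$ that are max-nodes (resp. min-nodes).
   Context: $\mathfrak B_n$ is the set of signed permutations $\pi=\pi_1\cdots\pi_n$ (words over $\{\pm1,\dots,\pm n\}$ with $|\pi_1|,\dots,|\pi_n|$ a permutation of $[n]$), compared as integers; set $\pi_0=0$. $\mathfrak D_n$ is the set of $\pi\in\mathfrak B_n$ with an even number of negative entries. $\mathrm{run}_B(\pi)$ is $1$ plus the number of $i\in\{1,\dots,n-1\}$ with $\pi_{i-1}<\pi_i>\pi_{i+1}$ or $\pi_{i-1}>\pi_i<\pi_{i+1}$; $R_n^{D}(x)=\sum_{\pi\in\mathfrak D_n}x^{\mathrm{run}_B(\pi)}$, and $R_n^{D,>}(x)$, $R_n^{D,<}(x)$ are the same sums restricted to $\pi_1>0$ and to $\pi_1<0$. Trees are rooted binary trees with each child designated left or right. A min–max tree is labeled bijectively by a totally ordered set so that each node's label is the minimum or maximum of its subtree's labels. A node with a child is inner; an inner node is a min-node (resp. max-node) if its label is the minimum (resp. maximum) of its subtree. An HR-tree is a min–max tree in which every inner node $s$ has a nonempty right subtree containing the maximum label of the subtree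 of $s$ if $s$ is a min-node, the minimum if $s$ is a max-node. The reading word is the in-order reading $w(T)=w(L)\,\ell_{\mathrm{root}}\,w(R)$. $\mathcal{BHR}_n$ is the set of HR-trees with label set $\{0,s_1,\dots,s_n\}$, $s_i\in\{i,-i\}$, ordered as integers, such that $0$ is the first letter of $w(T)$. For $T\in\mathcal{BHR}_n$ with $w(T)=0\pi_1\cdots\pi_n$ ($0$ at position $0$), list the nodes having exactly one child by increasing position of their labels in this word; the $k$-th is an odd or even one-child node according to the parity of $k$. $\widetilde{\mathcal{BHR}}_n^{+}$ (resp. $\widetilde{\mathcal{BHR}}_n^{-}$) is the set of $T\in\mathcal{BHR}_n$ such that every node with two children is a max-node (resp. min-node) and every max-node (resp. min-node) with exactly one child is an even one-child node. $\widetilde{\mathcal{DHR}}_n^{\pm}$ is the set of trees in $\widetilde{\mathcal{BHR}}_n^{\pm}$ having an even number of negative labels. *)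

theory Defs
  imports Main "HOL-Library.Tree"
begin

definition signed_perms :: "nat \<Rightarrow> int list set" where
  "signed_perms n = {\<pi>. length \<pi> = n \<and> set (map abs \<pi>) = int ` {1..n}}"

definition D_perms :: "nat \<Rightarrow> int list set" where
  "D_perms n = {\<pi> \<in> signed_perms n. even (length (filter (\<lambda>v. v < 0) \<pi>))}"

text \<open>run_B with pi_0 = 0: the word w = 0 # pi has w!i = pi_i.\<close>
definition runB :: "int list \<Rightarrow> nat" where
  "runB \<pi> = (let w = 0 # \<pi> in
     1 + card {i \<in> {1..<length \<pi>}.
        (w!(i-1) < w!i \<and> w!i > w!(i+1)) \<or> (w!(i-1) > w!i \<and> w!i < w!(i+1))})"

definition RD :: "nat \<Rightarrow> 'a::comm_ring_1 \<Rightarrow> 'a" where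
  "RD n x = (\<Sum>\<pi>\<in>D_perms n. x ^ runB \<pi>)"

definition RD_pos :: "nat \<Rightarrow> 'a::comm_ring_1 \<Rightarrow> 'a" where
  "RD_pos n x = (\<Sum>\<pi>\<in>{\<pi> \<in> D_perms n. hd \<pi> > 0}. x ^ runB \<pi>)"

definition RD_neg :: "nat \<Rightarrow> 'a::comm_ring_1 \<Rightarrow> 'a" where
  "RD_neg n x = (\<Sum>\<pi>\<in>{\<pi> \<in> D_perms n. hd \<pi> < 0}. x ^ runB \<pi>)"

text \<open>Nodes of a tree, each represented by the subtree rooted at it.\<close>
fun tnodes :: "'a tree \<Rightarrow> 'a tree set" where
  "tnodes Leaf = {}"
| "tnodes (Node l a r) = insert (Node l a r) (tnodes l \<union> tnodes r)"

fun root_label :: "'a tree \<Rightarrow> 'a" where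
  "root_label (Node l a r) = a"

fun right_sub :: "'a tree \<Rightarrow> 'a tree" where
  "right_sub Leaf = Leaf"
| "right_sub (Node l a r) = r"

fun nchildren :: "'a tree \<Rightarrow> nat" where
  "nchildren Leaf = 0"
| "nchildren (Node l a r) = (if l \<noteq> Leaf then 1 else 0) + (if r \<noteq> Leaf then 1 else 0)"

definition is_inner :: "'a tree \<Rightarrow> bool" where
  "is_inner s = (nchildren s > 0)"

definition is_min_node :: "'a::linorder tree \<Rightarrow> bool" where
  "is_min_node s = (is_inner s \<and> root_label s = Min (set_tree s))"

definition is_max_node :: "'a::linorder tree \<Rightarrow> bool" where
  "is_max_node s = (is_inner s \<and> root_label s = Max (set_tree s))"

definition min_max_tree :: "'a::linorder tree \<Rightarrow> bool" where
  "min_max_tree T = (distinct (inorder T) \<and>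
     (\<forall>s\<in>tnodes T. root_label s = Min (set_tree s) \<or> root_label s = Max (set_tree s)))"

definition HR_tree :: "'a::linorder tree \<Rightarrow> bool" where
  "HR_tree T = (min_max_tree T \<and>
     (\<forall>s\<in>tnodes T. is_inner s \<longrightarrow>
        right_sub s \<noteq> Leaf \<and>
        (is_min_node s \<longrightarrow> Max (set_tree s) \<in> set_tree (right_sub s)) \<and>
        (is_max_node s \<longrightarrow> Min (set_tree s) \<in> set_tree (right_sub s))))"

text \<open>BHR_n: HR-trees whose reading word is 0 followed by a signed permutation of [n]
  (equivalently: label set {0,s_1,...,s_n}, s_i = +-i, with 0 first in the reading word).\<close>
definition BHR :: "nat \<Rightarrow> int tree set" where
  "BHR n = {T. HR_tree T \<and> (\<exists>\<pi>\<in>signed_perms n. inorder T = 0 # \<pi>)}"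

definition onechild_labels :: "'a tree \<Rightarrow> 'a set" where
  "onechild_labels T = {root_label s | s. s \<in> tnodes T \<and> nchildren s = 1}"

text \<open>Rank k (1-based) of label a among the one-child-node labels, in reading-word order.\<close>
definition oc_rank :: "'a tree \<Rightarrow> 'a \<Rightarrow> nat" where
  "oc_rank T a = length (filter (\<lambda>b. b \<in> onechild_labels T) (takeWhile (\<lambda>b. b \<noteq> a) (inorder T))) + 1"

definition even_onechild :: "'a tree \<Rightarrow> 'a tree \<Rightarrow> bool" where
  "even_onechild T s = (nchildren s = 1 \<and> even (oc_rank T (root_label s)))"

definition BHR_plus :: "nat \<Rightarrow> int tree set" where
  "BHR_plus n = {T \<in> BHR n.
     (\<forall>s\<in>tnodes T. nchildren s = 2 \<longrightarrow> is_max_node s) \<and>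
     (\<forall>s\<in>tnodes T. is_max_node s \<and> nchildren s = 1 \<longrightarrow> even_onechild T s)}"

definition BHR_minus :: "nat \<Rightarrow> int tree set" where
  "BHR_minus n = {T \<in> BHR n.
     (\<forall>s\<in>tnodes T. nchildren s = 2 \<longrightarrow> is_min_node s) \<and>
     (\<forall>s\<in>tnodes T. is_min_node s \<and> nchildren s = 1 \<longrightarrow> even_onechild T s)}"

definition DHR_plus :: "nat \<Rightarrow> int tree set" where
  "DHR_plus n = {T \<in> BHR_plus n. even (card {a \<in> set_tree T. a < 0})}"

definition DHR_minus :: "nat \<Rightarrow> int tree set" where
  "DHR_minus n = {T \<in> BHR_minus n. even (card {a \<in> set_tree T. a < 0})}"

definition max_count :: "'a::linorder tree \<Rightarrow> nat" where
  "max_count T = card {s \<in> tnodes T. is_max_node s}"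

definition min_count :: "'a::linorder tree \<Rightarrow> nat" where
  "min_count T = card {s \<in> tnodes T. is_min_node s}"

end

theory Submission
  imports Defs
begin


definition perms :: "int set \<Rightarrow> int list set" where
  "perms V = {w. distinct w \<and> set w = V}"

lemma tw_less: "y \<in> set xs \<Longrightarrow> \<not> P y \<Longrightarrow> length (takeWhile P xs) < length xs"
  by (induction xs) auto

function hr :: "int list \<Rightarrow> int tree" where
  "hr [] = Leaf"
| "hr (x # xs) = (let P = (\<lambda>y. y \<noteq> Min (set (x#xs)) \<and> y \<noteq> Max (set (x#xs)));
      rest = dropWhile P (x#xs) in Node (hr (takeWhile P (x#xs))) (hd rest) (hr (tl rest)))"
  by pat_completeness auto
termination
  apply (relation "measure length")
    apply auto
  subgoal for x xs
    apply (rule tw_less[where y="Min (set (x#xs))"])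
    using Min_in[of "insert x (set xs)"] by auto
  subgoal for x xs
    by (metis diff_le_self le_imp_less_Suc length_dropWhile_le length_tl order.trans)
  done

declare hr.simps(2)[simp del]

lemma hr_split:
  assumes "w = l @ a # r" "a = Min (set w) \<or> a = Max (set w)"
    "Min (set w) \<notin> set l" "Max (set w) \<notin> set l"
  shows "hr w = Node (hr l) a (hr r)"
proof -
  obtain y ys where w: "w = y # ys" using assms(1) by (cases l) auto
  define P where "P = (\<lambda>z. z \<noteq> Min (set w) \<and> z \<noteq> Max (set w))"
  have "\<forall>z\<in>set l. P z" using assms(3,4) P_def by auto
  moreover have "\<not> P a" using assms(2) P_def by auto
  ultimately have tw: "takeWhile P w = l" and dw: "dropWhile P w = a # r"
    using assms(1) by (simp_all add: takeWhile_append2 dropWhile_append2)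
  have "hr w = Node (hr (takeWhile P w)) (hd (dropWhile P w)) (hr (tl (dropWhile P w)))"
    unfolding w P_def by (simp add: Let_def hr.simps(2))
  then show ?thesis using tw dw by simp
qed

lemma hr_dec:
  assumes "w \<noteq> []"
  shows "\<exists>l a r. w = l @ a # r \<and> (a = Min (set w) \<or> a = Max (set w)) \<and>
    Min (set w) \<notin> set l \<and> Max (set w) \<notin> set l"
proof -
  define P where "P = (\<lambda>z. z \<noteq> Min (set w) \<and> z \<noteq> Max (set w))"
  have mi: "Min (set w) \<in> set w" using assms by simp
  have ne: "dropWhile P w \<noteq> []" using mi P_def by (simp add: dropWhile_eq_Nil_conv) blast
  then obtain a r where dw: "dropWhile P w = a # r" by (cases "dropWhile P w") auto
  have "\<not> P a" using dw by (metis hd_dropWhile list.sel(1) ne)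
  moreover have "w = takeWhile P w @ a # r" using dw by (metis takeWhile_dropWhile_id)
  moreover have "\<forall>z\<in>set (takeWhile P w). P z" by (meson set_takeWhileD)
  ultimately show ?thesis unfolding P_def by blast
qed

lemma hr_dec2:
  assumes "w \<noteq> []"
  obtains l a r where "w = l @ a # r" "a = Min (set w) \<or> a = Max (set w)"
    "Min (set w) \<notin> set l" "Max (set w) \<notin> set l" "hr w = Node (hr l) a (hr r)"
  using hr_dec[OF assms] hr_split by metis

lemma inorder_hr[simp]: "inorder (hr w) = w"
proof (induction "length w" arbitrary: w rule: less_induct)
  case less
  show ?case
  proof (cases "w = []")
    case True
    then show ?thesis by simp
  next
    case False
    then obtain l a r where "w = l @ a # r" "hr w = Node (hr l) a (hr r)"
      using hr_dec2 by metis
    then show ?thesis using less by simp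
  qed
qed

lemma set_tree_hr[simp]: "set_tree (hr w) = set w"
  by (metis inorder_hr set_inorder)

lemma size_hr[simp]: "size (hr w) = length w"
  by (metis inorder_hr length_inorder)

lemma hr_Leaf_iff[simp]: "hr w = Leaf \<longleftrightarrow> w = []"
  by (metis inorder_hr inorder.simps(1) hr.simps(1))


definition rt :: "int set \<Rightarrow> bool \<Rightarrow> int" where
  "rt V b = (if b then Max V else Min V)"

lemma finite_perms: "finite V \<Longrightarrow> finite (perms V)"
proof -
  assume fV: "finite V"
  have "perms V \<subseteq> {xs. set xs \<subseteq> V \<and> length xs = card V}"
    unfolding perms_def using distinct_card by fastforce
  then show ?thesis using finite_lists_length_eq[OF fV] by (rule finite_subset)
qed

lemma length_perms: "w \<in> perms V \<Longrightarrow> length w = card V"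
  unfolding perms_def using distinct_card by fastforce

lemma perms_empty[simp]: "perms {} = {[]}"
  unfolding perms_def by auto

lemma perms_single[simp]: "perms {v} = {[v]}"
proof -
  have "w = [v]" if "distinct w" "set w = {v}" for w
  proof -
    have "length w = 1" using that distinct_card by fastforce
    then obtain y where "w = [y]" by (metis One_nat_def length_0_conv length_Suc_conv)
    then show ?thesis using that by auto
  qed
  then show ?thesis unfolding perms_def by auto
qed

lemma Min_ne_Max:
  assumes "finite V" "card V \<ge> 2"
  shows "Min V \<noteq> Max V"
proof
  assume eq: "Min V = Max V"
  have ne: "V \<noteq> {}" using assms by auto
  have "V \<subseteq> {Min V}"
  proof
    fix v assume "v \<in> V"
    then have "Min V \<le> v" "v \<le> Max V" using assms(1) by auto
    then show "v \<in> {Min V}" using eq by auto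
  qed
  then have "card V \<le> card {Min V}" by (intro card_mono) auto
  then have "card V \<le> 1" by simp
  then show False using assms by auto
qed

lemma rt_in: "finite V \<Longrightarrow> V \<noteq> {} \<Longrightarrow> rt V b \<in> V"
  unfolding rt_def by auto

lemma rt_ext: "rt V b = Min V \<or> rt V b = Max V"
  unfolding rt_def by auto

lemma tw_app: "(\<forall>x\<in>set l. P x) \<Longrightarrow> \<not> P a \<Longrightarrow> takeWhile P (l @ a # r) = l"
  by (induction l) auto

lemma tw_unique:
  assumes "set l \<inter> X = {}" "a \<in> X" "set l' \<inter> X = {}" "a' \<in> X"
    "l @ a # r = l' @ a' # r'"
  shows "l = l' \<and> a = a' \<and> r = r'"
proof -
  let ?P = "\<lambda>z. z \<notin> X"
  have t1: "takeWhile ?P (l @ a # r) = l" using assms(1,2) by (intro tw_app) auto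
  have t2: "takeWhile ?P (l' @ a' # r') = l'" using assms(3,4) by (intro tw_app) auto
  have "l = l'" using t1 t2 assms(5) by simp
  then show ?thesis using assms(5) by simp
qed

lemma perms_bij:
  assumes fV: "finite V" and cV: "card V \<ge> 2"
  shows "bij_betw (\<lambda>(b,A,l,r). l @ rt V b # r)
     (SIGMA b:UNIV. SIGMA A:Pow (V - {Min V, Max V}). perms A \<times> perms (V - {rt V b} - A))
     (perms V)"
proof -
  have ne: "V \<noteq> {}" using cV by auto
  have mm: "Min V \<noteq> Max V" using Min_ne_Max[OF fV cV] .
  let ?S = "(SIGMA b:UNIV. SIGMA A:Pow (V - {Min V, Max V}). perms A \<times> perms (V - {rt V b} - A))"
  let ?g = "(\<lambda>(b,A,l,r). l @ rt V b # r)"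
  have into: "?g y \<in> perms V" if "y \<in> ?S" for y
  proof -
    obtain b A l r where y: "y = (b,A,l,r)" by (cases y) auto
    have A: "A \<subseteq> V - {Min V, Max V}" "l \<in> perms A" "r \<in> perms (V - {rt V b} - A)"
      using that y by auto
    then have A2: "distinct l" "set l = A" "distinct r" "set r = V - {rt V b} - A"
      unfolding perms_def by auto
    have rV: "rt V b \<in> V" using rt_in[OF fV ne] .
    have rA: "rt V b \<notin> A" using A(1) rt_ext[of V b] by blast
    have "distinct (l @ rt V b # r)" using A2 rA by auto
    moreover have "set (l @ rt V b # r) = V" using A2 rV A(1) by auto
    ultimately show ?thesis using y unfolding perms_def by simp
  qed
  have inj: "inj_on ?g ?S"
  proof (rule inj_onI)
    fix y1 y2 assume y1: "y1 \<in> ?S" and y2: "y2 \<in> ?S" and eq: "?g y1 = ?g y2"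
    obtain b A l r where e1: "y1 = (b,A,l,r)" by (cases y1) auto
    obtain b' A' l' r' where e2: "y2 = (b',A',l',r')" by (cases y2) auto
    have "l \<in> perms A" "A \<subseteq> V - {Min V, Max V}" "l' \<in> perms A'" "A' \<subseteq> V - {Min V, Max V}"
      using y1 y2 e1 e2 by auto
    then have h1: "set l \<inter> {Min V, Max V} = {}" "set l' \<inter> {Min V, Max V} = {}"
      unfolding perms_def by auto
    have "l @ rt V b # r = l' @ rt V b' # r'" using eq e1 e2 by simp
    moreover have "rt V b \<in> {Min V, Max V}" "rt V b' \<in> {Min V, Max V}"
      using rt_ext[of V b] rt_ext[of V b'] by auto
    ultimately have "l = l' \<and> rt V b = rt V b' \<and> r = r'"
      using tw_unique[OF h1(1) _ h1(2)] by metis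
    moreover have "rt V b = rt V b' \<Longrightarrow> b = b'" using mm unfolding rt_def by (auto split: if_splits)
    moreover have "A = set l" "A' = set l'" using \<open>l \<in> perms A\<close> \<open>l' \<in> perms A'\<close> unfolding perms_def by auto
    ultimately show "y1 = y2" using e1 e2 by auto
  qed
  have onto: "perms V \<subseteq> ?g ` ?S"
  proof
    fix w assume w: "w \<in> perms V"
    then have dw: "distinct w" and sw: "set w = V" unfolding perms_def by auto
    have "w \<noteq> []" using sw ne by auto
    then obtain l a r where d: "w = l @ a # r" "a = Min (set w) \<or> a = Max (set w)"
      "Min (set w) \<notin> set l" "Max (set w) \<notin> set l" using hr_dec by metis
    define b where "b = (a = Max V)"
    have ab: "a = rt V b" using d(2) sw unfolding b_def rt_def by auto
    have "set l \<subseteq> V - {Min V, Max V}" using d sw by auto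
    moreover have "l \<in> perms (set l)" using dw d(1) unfolding perms_def by auto
    moreover have "r \<in> perms (V - {rt V b} - set l)"
    proof -
      have "distinct r" "a \<notin> set r" "set l \<inter> set r = {}" "a \<notin> set l" using dw d(1) by auto
      moreover have "set r = set w - {a} - set l" using d(1) calculation by auto
      ultimately show ?thesis using sw ab unfolding perms_def by simp
    qed
    ultimately have mem: "(b, set l, l, r) \<in> ?S" by simp
    have "w = ?g (b, set l, l, r)" using d(1) ab by simp
    then show "w \<in> ?g ` ?S" using mem by (rule image_eqI)
  qed
  have "?g ` ?S \<subseteq> perms V" by (rule image_subsetI) (rule into)
  then have "?g ` ?S = perms V" using onto by (rule subset_antisym)
  then show ?thesis unfolding bij_betw_def using inj by simp
qed


lemma sum_perms_dec:
  assumes fV: "finite V" and cV: "card V \<ge> 2"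
  shows "(\<Sum>w\<in>perms V. F w) = (\<Sum>b\<in>UNIV. \<Sum>A\<in>Pow (V - {Min V, Max V}).
           \<Sum>l\<in>perms A. \<Sum>r\<in>perms (V - {rt V b} - A). F (l @ rt V b # r))"
proof -
  have fin: "finite A \<Longrightarrow> finite (perms A)" for A by (rule finite_perms)
  define X where "X = V - {Min V, Max V}"
  have fX: "finite X" using fV X_def by auto
  define C where "C = (\<lambda>b A. perms A \<times> perms (V - {rt V b} - A))"
  define B where "B = (\<lambda>b. SIGMA A:Pow X. C b A)"
  have fC: "finite (C b A)" if "A \<in> Pow X" for b A
    using that fX fV unfolding C_def by (auto intro!: fin intro: finite_subset)
  have fB: "finite (B b)" for b unfolding B_def using fC fX by auto
  have "(\<Sum>w\<in>perms V. F w) = (\<Sum>y\<in>(SIGMA b:UNIV. B b). F ((\<lambda>(b,A,l,r). l @ rt V b # r) y))"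
    using sum.reindex_bij_betw[OF perms_bij[OF fV cV], of F] unfolding B_def C_def X_def by simp
  also have "\<dots> = (\<Sum>(b,z)\<in>(SIGMA b:UNIV. B b). F ((\<lambda>(A,l,r). l @ rt V b # r) z))"
    by (rule sum.cong) auto
  also have "\<dots> = (\<Sum>b\<in>UNIV. \<Sum>z\<in>B b. F ((\<lambda>(A,l,r). l @ rt V b # r) z))"
    by (rule sum.Sigma[symmetric]) (use fB in auto)
  also have "\<dots> = (\<Sum>b\<in>UNIV. \<Sum>(A,y)\<in>(SIGMA A:Pow X. C b A). F ((\<lambda>(l,r). l @ rt V b # r) y))"
    unfolding B_def by (rule sum.cong[OF refl], rule sum.cong) auto
  also have "\<dots> = (\<Sum>b\<in>UNIV. \<Sum>A\<in>Pow X. \<Sum>y\<in>C b A. F ((\<lambda>(l,r). l @ rt V b # r) y))"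
    by (rule sum.cong[OF refl], rule sum.Sigma[symmetric]) (use fX fC in auto)
  also have "\<dots> = (\<Sum>b\<in>UNIV. \<Sum>A\<in>Pow X.
           \<Sum>l\<in>perms A. \<Sum>r\<in>perms (V - {rt V b} - A). F (l @ rt V b # r))"
    unfolding C_def
    by (rule sum.cong[OF refl], rule sum.cong[OF refl], subst sum.cartesian_product) (simp add: split_def)
  finally show ?thesis unfolding X_def .
qed

lemma hr_comp:
  assumes fV: "finite V" and cV: "card V \<ge> 2" and A: "A \<subseteq> V - {Min V, Max V}"
    and l: "set l = A" and r: "set r = V - {rt V b} - A"
  shows "hr (l @ rt V b # r) = Node (hr l) (rt V b) (hr r)" "r \<noteq> []"
    "set (l @ rt V b # r) = V"
proof -
  have ne: "V \<noteq> {}" using cV by auto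
  have mm: "Min V \<noteq> Max V" using Min_ne_Max[OF fV cV] .
  show sw: "set (l @ rt V b # r) = V" using l r A rt_in[OF fV ne, of b] by auto
  show "hr (l @ rt V b # r) = Node (hr l) (rt V b) (hr r)"
    by (rule hr_split) (use sw l A rt_ext[of V b] in auto)
  have "rt V (\<not> b) \<in> set r" using r A mm rt_in[OF fV ne, of "\<not>b"] unfolding rt_def by auto
  then show "r \<noteq> []" by auto
qed


section \<open>Turning points\<close>

fun turn :: "int option \<Rightarrow> int \<Rightarrow> int option \<Rightarrow> nat" where
  "turn (Some p) y (Some q) = (if (p < y \<and> y > q) \<or> (p > y \<and> y < q) then 1 else 0)"
| "turn None y c = 0"
| "turn a y None = 0"

fun tpv :: "int option \<Rightarrow> int list \<Rightarrow> int option \<Rightarrow> nat" where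
  "tpv a [] c = 0"
| "tpv a [y] c = turn a y c"
| "tpv a (y # z # zs) c = turn a y (Some z) + tpv (Some y) (z # zs) c"

lemma tpv_split:
  "tpv a (l @ y # r) c = tpv a l (Some y) +
     turn (if l = [] then a else Some (last l)) y (if r = [] then c else Some (hd r)) + tpv (Some y) r c"
proof (induction l arbitrary: a)
  case Nil
  then show ?case by (cases r) auto
next
  case (Cons z zs)
  then show ?case by (cases zs) auto
qed

fun tpT :: "bool option \<Rightarrow> int tree \<Rightarrow> bool option \<Rightarrow> nat" where
  "tpT al Leaf be = 0"
| "tpT al (Node L a R) be = (let m = (a = Max (set_tree (Node L a R))) in
     if L = Leaf \<and> R = Leaf then (if al \<noteq> None \<and> al = be then 1 else 0)
     else if L = Leaf then (if al = Some (\<not> m) then 1 else 0) + tpT (Some m) R be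
     else tpT al L (Some m) + 1 + tpT (Some m) R be)"

definition nb :: "bool option \<Rightarrow> int set \<Rightarrow> int option \<Rightarrow> bool" where
  "nb al V c = (case al of None \<Rightarrow> c = None
     | Some True \<Rightarrow> (\<exists>p. c = Some p \<and> (\<forall>v\<in>V. v < p))
     | Some False \<Rightarrow> (\<exists>p. c = Some p \<and> (\<forall>v\<in>V. p < v)))"

lemma nb_mono: "nb al V c \<Longrightarrow> W \<subseteq> V \<Longrightarrow> nb al W c"
  unfolding nb_def by (auto split: option.splits bool.splits)

lemma turn_single:
  assumes "nb al {y} a" "nb be {y} c"
  shows "turn a y c = (if al \<noteq> None \<and> al = be then 1 else 0)"
  using assms unfolding nb_def by (auto split: option.splits bool.splits)

lemma turn_first:
  assumes "nb al V a" "y \<in> V" "q \<in> V" "m \<Longrightarrow> q < y" "\<not> m \<Longrightarrow> y < q"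
  shows "turn a y (Some q) = (if al = Some (\<not> m) then 1 else 0)"
  using assms unfolding nb_def by (cases m) (auto split: option.splits bool.splits)

lemma dec_facts:
  assumes "distinct w" "w = l @ x # r" "x = Min (set w) \<or> x = Max (set w)"
    "Min (set w) \<notin> set l" "Max (set w) \<notin> set l" "length w \<ge> 2"
  shows "r \<noteq> []" "Min (set w) \<noteq> Max (set w)"
    "x = Max (set w) \<Longrightarrow> \<forall>v\<in>set l \<union> set r. v < x"
    "x \<noteq> Max (set w) \<Longrightarrow> \<forall>v\<in>set l \<union> set r. x < v"
proof -
  have fw: "finite (set w)" by simp
  have c2: "card (set w) \<ge> 2" using assms(1,6) by (simp add: distinct_card)
  show mm: "Min (set w) \<noteq> Max (set w)" using Min_ne_Max[OF fw c2] .
  have xn: "x \<notin> set l" "x \<notin> set r" using assms(1,2) by auto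
  show "x = Max (set w) \<Longrightarrow> \<forall>v\<in>set l \<union> set r. v < x"
  proof
    fix v assume "x = Max (set w)" "v \<in> set l \<union> set r"
    then show "v < x" using xn assms(2) Max_ge[OF fw, of v] by (auto simp: order.order_iff_strict)
  qed
  show "x \<noteq> Max (set w) \<Longrightarrow> \<forall>v\<in>set l \<union> set r. x < v"
  proof
    fix v assume "x \<noteq> Max (set w)" "v \<in> set l \<union> set r"
    then have "x = Min (set w)" "v \<noteq> x" using assms(3) xn by auto
    then show "x < v" using \<open>v \<in> set l \<union> set r\<close> assms(2) Min_le[OF fw, of v] by auto
  qed
  show "r \<noteq> []"
  proof
    assume r: "r = []"
    have "Min (set w) \<in> set w" "Max (set w) \<in> set w" using assms(6) by (auto intro!: Min_in Max_in)
    then have "Min (set w) = x" "Max (set w) = x" using r assms(2,4,5) by auto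
    then show False using mm by simp
  qed
qed

lemma tpv_tpT:
  "distinct w \<Longrightarrow> nb al (set w) a \<Longrightarrow> nb be (set w) c \<Longrightarrow> tpv a w c = tpT al (hr w) be"
proof (induction "length w" arbitrary: w al a be c rule: less_induct)
  case less
  show ?case
  proof (cases "w = []")
    case True
    then show ?thesis by simp
  next
    case False
    then obtain l x r where d: "w = l @ x # r" "x = Min (set w) \<or> x = Max (set w)"
      "Min (set w) \<notin> set l" "Max (set w) \<notin> set l" "hr w = Node (hr l) x (hr r)"
      using hr_dec2 by metis
    have st: "set_tree (Node (hr l) x (hr r)) = set w" using d(1) by simp
    define m where "m = (x = Max (set w))"
    show ?thesis
    proof (cases "length w \<ge> 2")
      case False
      then have "l = [] \<and> r = []" using d(1) by (cases l; cases r) auto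
      then have "l = []" "r = []" by auto
      then show ?thesis using d less.prems turn_single[of al x a be c] by simp
    next
      case True
      note df = dec_facts[OF less.prems(1) d(1-4) True]
      have dl: "distinct l" and dr: "distinct r" using less.prems(1) d(1) by auto
      have nbr: "nb (Some m) (set r) (Some x)"
        using df(3,4) unfolding nb_def m_def by (cases "x = Max (set w)") auto
      have nbl: "nb (Some m) (set l) (Some x)"
        using df(3,4) unfolding nb_def m_def by (cases "x = Max (set w)") auto
      have sr: "set r \<subseteq> set w" and sl: "set l \<subseteq> set w" using d(1) by auto
      have IHr: "tpv (Some x) r c = tpT (Some m) (hr r) be"
        using less.hyps[of r "Some m" "Some x" be c] d(1) dr nbr nb_mono[OF less.prems(3) sr] by simp
      have hdr: "hd r \<in> set r" using df(1) by simp
      show ?thesis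
      proof (cases "l = []")
        case True
        have "turn a x (Some (hd r)) = (if al = Some (\<not> m) then 1 else 0)"
          by (rule turn_first[OF less.prems(2)]) (use d(1) hdr df(3,4) m_def in auto)
        then show ?thesis using True d(1,5) df(1) IHr st tpv_split[of a l x r c]
          by (simp add: Let_def m_def)
      next
        case False
        have IHl: "tpv a l (Some x) = tpT al (hr l) (Some m)"
          using less.hyps[of l al a "Some m" "Some x"] d(1) dl nbl nb_mono[OF less.prems(2) sl] by simp
        have "last l \<in> set l" using False by simp
        then have "turn (Some (last l)) x (Some (hd r)) = 1"
          using hdr df(3,4) by (cases "x = Max (set w)") auto
        then show ?thesis using False d(1,5) df(1) IHr IHl st tpv_split[of a l x r c]
          by (simp add: Let_def m_def)
      qed
    qed
  qed
qed

definition TP :: "int list \<Rightarrow> nat \<Rightarrow> bool" where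
  "TP u i = ((u!(i-1) < u!i \<and> u!i > u!(i+1)) \<or> (u!(i-1) > u!i \<and> u!i < u!(i+1)))"

lemma TP_shift: "i \<ge> 1 \<Longrightarrow> TP (p # u) (Suc i) = TP u i"
  unfolding TP_def by (cases i) auto

lemma tpv_card: "tpv (Some p) w None = card {i \<in> {1..<length w}. TP (p # w) i}"
proof (induction w arbitrary: p)
  case Nil
  then show ?case by simp
next
  case (Cons y w)
  show ?case
  proof (cases w)
    case Nil
    then show ?thesis by simp
  next
    case (Cons z zs)
    let ?S = "{i \<in> {1..<length (y # w)}. TP (p # y # w) i}"
    let ?S' = "{i \<in> {1..<length w}. TP (y # w) i}"
    have eq: "?S = (if TP (p # y # w) 1 then {1} else {}) \<union> Suc ` ?S'"
    proof (rule set_eqI)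
      fix i
      show "i \<in> ?S \<longleftrightarrow> i \<in> (if TP (p # y # w) 1 then {1} else {}) \<union> Suc ` ?S'"
      proof (cases "i \<le> 1")
        case True
        then show ?thesis using Cons by (cases "i = 1") auto
      next
        case False
        then obtain j where j: "i = Suc j" "j \<ge> 1" by (cases i) auto
        then show ?thesis using TP_shift[of j p "y # w"] by auto
      qed
    qed
    have "card ?S = (if TP (p # y # w) 1 then 1 else 0) + card (Suc ` ?S')"
      unfolding eq by (subst card_Un_disjoint) auto
    also have "card (Suc ` ?S') = card ?S'" by (rule card_image) auto
    finally have "card ?S = (if TP (p # y # w) 1 then 1 else 0) + tpv (Some y) w None"
      using Cons.IH by simp
    moreover have "tpv (Some p) (y # w) None = turn (Some p) y (Some z) + tpv (Some y) w None"
      using Cons by simp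
    moreover have "turn (Some p) y (Some z) = (if TP (p # y # w) 1 then 1 else 0)"
      using Cons unfolding TP_def by auto
    ultimately show ?thesis by simp
  qed
qed

lemma runB_tpv: "runB \<pi> = 1 + tpv None (0 # \<pi>) None"
proof -
  have "runB \<pi> = 1 + card {i \<in> {1..<length \<pi>}. TP (0 # \<pi>) i}"
    unfolding runB_def TP_def Let_def by simp
  also have "\<dots> = 1 + tpv (Some 0) \<pi> None" using tpv_card by simp
  also have "tpv (Some 0) \<pi> None = tpv None (0 # \<pi>) None" by (cases \<pi>) auto
  finally show ?thesis .
qed

lemma runB_tpT: "distinct (0 # \<pi>) \<Longrightarrow> runB \<pi> = 1 + tpT None (hr (0 # \<pi>)) None"
  using runB_tpv tpv_tpT[of "0 # \<pi>" None None None None] by (simp add: nb_def)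


lemma tnodes_sub: "s \<in> tnodes T \<Longrightarrow> s \<noteq> Leaf \<and> set_tree s \<subseteq> set_tree T \<and> size s \<le> size T"
  by (induction T) auto

lemma tnodes_finite: "finite (tnodes T)"
  by (induction T) auto

lemma hr_single[simp]: "hr [a] = Node Leaf a Leaf"
  by (simp add: Let_def hr.simps(2))

lemma HR_hr: "distinct w \<Longrightarrow> HR_tree (hr w)"
proof -
  assume dw: "distinct w"
  have "\<forall>s\<in>tnodes (hr w). (root_label s = Min (set_tree s) \<or> root_label s = Max (set_tree s)) \<and>
      (is_inner s \<longrightarrow> right_sub s \<noteq> Leaf \<and>
        (is_min_node s \<longrightarrow> Max (set_tree s) \<in> set_tree (right_sub s)) \<and>
        (is_max_node s \<longrightarrow> Min (set_tree s) \<in> set_tree (right_sub s)))"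
    using dw
  proof (induction "length w" arbitrary: w rule: less_induct)
    case less
    show ?case
    proof (cases "w = []")
      case True
      then show ?thesis by simp
    next
      case False
      then obtain l x r where d: "w = l @ x # r" "x = Min (set w) \<or> x = Max (set w)"
        "Min (set w) \<notin> set l" "Max (set w) \<notin> set l" "hr w = Node (hr l) x (hr r)"
        using hr_dec2 by metis
      have st: "set_tree (Node (hr l) x (hr r)) = set w" using d(1) by simp
      have dl: "distinct l" and dr: "distinct r" using less.prems d(1) by auto
      have IH: "\<forall>s\<in>tnodes (hr l) \<union> tnodes (hr r). NP s"
        if "\<And>u. length u < length w \<Longrightarrow> distinct u \<Longrightarrow> \<forall>s\<in>tnodes (hr u). NP s" for NP
        using that[of l] that[of r] dl dr d(1) by auto
      have root: "(x = Min (set w) \<or> x = Max (set w)) \<and>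
        (is_inner (Node (hr l) x (hr r)) \<longrightarrow> hr r \<noteq> Leaf \<and>
          (is_min_node (Node (hr l) x (hr r)) \<longrightarrow> Max (set w) \<in> set r) \<and>
          (is_max_node (Node (hr l) x (hr r)) \<longrightarrow> Min (set w) \<in> set r))"
      proof (intro conjI impI)
        show "x = Min (set w) \<or> x = Max (set w)" by (rule d(2))
      next
        assume inn: "is_inner (Node (hr l) x (hr r))"
        then have "l \<noteq> [] \<or> r \<noteq> []" unfolding is_inner_def by (auto split: if_splits)
        then have len: "length w \<ge> 2" using d(1) by (cases l; cases r) auto
        note df = dec_facts[OF less.prems d(1-4) len]
        show "hr r \<noteq> Leaf" using df(1) by simp
        have inw: "Min (set w) \<in> set w" "Max (set w) \<in> set w" using False by auto
        show "Max (set w) \<in> set r" if "is_min_node (Node (hr l) x (hr r))"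
        proof -
          have "x = Min (set w)" using that st unfolding is_min_node_def by simp
          then show ?thesis using inw d(1,4) df(2) by auto
        qed
        show "Min (set w) \<in> set r" if "is_max_node (Node (hr l) x (hr r))"
        proof -
          have "x = Max (set w)" using that st unfolding is_max_node_def by simp
          then show ?thesis using inw d(1,3) df(2) by auto
        qed
      qed
      show ?thesis using IH[OF less.hyps] root d(5) st by simp
    qed
  qed
  then show ?thesis unfolding HR_tree_def min_max_tree_def using dw by simp
qed


lemma HR_sub:
  assumes "HR_tree (Node L a R)"
  shows "HR_tree L" "HR_tree R"
  using assms unfolding HR_tree_def min_max_tree_def by auto

lemma hr_unique: "HR_tree T \<Longrightarrow> T = hr (inorder T)"
proof (induction T)
  case Leaf
  then show ?case by simp
next
  case (Node L a R)
  have IHL: "L = hr (inorder L)" using Node.IH(1) HR_sub[OF Node.prems] by simp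
  have IHR: "R = hr (inorder R)" using Node.IH(2) HR_sub[OF Node.prems] by simp
  let ?T = "Node L a R"
  let ?w = "inorder L @ a # inorder R"
  have dist: "distinct ?w" using Node.prems unfolding HR_tree_def min_max_tree_def by simp
  have sw: "set ?w = set_tree ?T" by simp
  have top: "\<forall>s\<in>tnodes ?T. root_label s = Min (set_tree s) \<or> root_label s = Max (set_tree s)"
    and hrc: "\<forall>s\<in>tnodes ?T. is_inner s \<longrightarrow> right_sub s \<noteq> Leaf \<and>
        (is_min_node s \<longrightarrow> Max (set_tree s) \<in> set_tree (right_sub s)) \<and>
        (is_max_node s \<longrightarrow> Min (set_tree s) \<in> set_tree (right_sub s))"
    using Node.prems unfolding HR_tree_def min_max_tree_def by auto
  have aext: "a = Min (set_tree ?T) \<or> a = Max (set_tree ?T)" using top by simp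
  show ?case
  proof (cases "L = Leaf \<and> R = Leaf")
    case True
    then show ?thesis by simp
  next
    case False
    then have inn: "is_inner ?T" unfolding is_inner_def by auto
    have disj: "set_tree L \<inter> set_tree R = {}" "a \<notin> set_tree L" "a \<notin> set_tree R"
      using dist by auto
    have "Min (set ?w) \<notin> set (inorder L) \<and> Max (set ?w) \<notin> set (inorder L)"
    proof (cases "a = Min (set_tree ?T)")
      case True
      then have "is_min_node ?T" using inn unfolding is_min_node_def by simp
      moreover have hT: "is_inner ?T \<longrightarrow> right_sub ?T \<noteq> Leaf \<and>
        (is_min_node ?T \<longrightarrow> Max (set_tree ?T) \<in> set_tree (right_sub ?T)) \<and>
        (is_max_node ?T \<longrightarrow> Min (set_tree ?T) \<in> set_tree (right_sub ?T))"
        using hrc by (rule bspec) simp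
      ultimately have "Max (set_tree ?T) \<in> set_tree (right_sub ?T)" using inn by blast
      then have "Max (set_tree ?T) \<in> set_tree R" by (simp only: right_sub.simps)
      then show ?thesis using True disj sw by auto
    next
      case False
      then have aM: "a = Max (set_tree ?T)" using aext by simp
      then have "is_max_node ?T" using inn unfolding is_max_node_def by simp
      moreover have hT: "is_inner ?T \<longrightarrow> right_sub ?T \<noteq> Leaf \<and>
        (is_min_node ?T \<longrightarrow> Max (set_tree ?T) \<in> set_tree (right_sub ?T)) \<and>
        (is_max_node ?T \<longrightarrow> Min (set_tree ?T) \<in> set_tree (right_sub ?T))"
        using hrc by (rule bspec) simp
      ultimately have "Min (set_tree ?T) \<in> set_tree (right_sub ?T)" using inn by blast
      then have "Min (set_tree ?T) \<in> set_tree R" by (simp only: right_sub.simps)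
      then show ?thesis using aM disj sw by auto
    qed
    then have "hr ?w = Node (hr (inorder L)) a (hr (inorder R))"
      using aext sw by (intro hr_split) auto
    then show ?thesis using IHL IHR by simp
  qed
qed

lemma signed_perms_distinct:
  assumes "\<pi> \<in> signed_perms n"
  shows "distinct (0 # \<pi>)"
proof -
  have l: "length \<pi> = n" and s: "set (map abs \<pi>) = int ` {1..n}"
    using assms unfolding signed_perms_def by auto
  have "card (set (map abs \<pi>)) = n" using s by (simp add: card_image)
  then have "distinct (map abs \<pi>)" using l by (simp add: card_distinct)
  then have "distinct \<pi>" by (simp add: distinct_map)
  moreover have "0 \<notin> set \<pi>"
  proof
    assume "0 \<in> set \<pi>"
    then have "(0::int) \<in> set (map abs \<pi>)" by force
    then show False using s by auto
  qed
  ultimately show ?thesis by simp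
qed

lemma BHR_eq: "BHR n = (\<lambda>\<pi>. hr (0 # \<pi>)) ` signed_perms n"
proof (rule set_eqI)
  fix T
  show "T \<in> BHR n \<longleftrightarrow> T \<in> (\<lambda>\<pi>. hr (0 # \<pi>)) ` signed_perms n"
  proof
    assume "T \<in> BHR n"
    then obtain \<pi> where "HR_tree T" "\<pi> \<in> signed_perms n" "inorder T = 0 # \<pi>"
      unfolding BHR_def by auto
    then show "T \<in> (\<lambda>\<pi>. hr (0 # \<pi>)) ` signed_perms n" using hr_unique by force
  next
    assume "T \<in> (\<lambda>\<pi>. hr (0 # \<pi>)) ` signed_perms n"
    then obtain \<pi> where "\<pi> \<in> signed_perms n" "T = hr (0 # \<pi>)" by auto
    then show "T \<in> BHR n" unfolding BHR_def using HR_hr[OF signed_perms_distinct] by auto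
  qed
qed

fun ocn :: "'a tree \<Rightarrow> nat" where
  "ocn Leaf = 0"
| "ocn (Node L a R) = ocn L + ocn R + (if nchildren (Node L a R) = 1 then 1 else 0)"

lemma onechild_labels_Leaf[simp]: "onechild_labels Leaf = {}"
  unfolding onechild_labels_def by simp

lemma onechild_labels_Node:
  "onechild_labels (Node L a R) = onechild_labels L \<union> onechild_labels R \<union>
     (if nchildren (Node L a R) = 1 then {a} else {})"
proof -
  have "onechild_labels (Node L a R) = {root_label s |s. s \<in> insert (Node L a R) (tnodes L \<union> tnodes R) \<and> nchildren s = 1}"
    unfolding onechild_labels_def by simp
  also have "\<dots> = {root_label s |s. s = Node L a R \<and> nchildren s = 1} \<union> onechild_labels L \<union> onechild_labels R"
    unfolding onechild_labels_def by blast
  also have "{root_label s |s. s = Node L a R \<and> nchildren s = 1} = (if nchildren (Node L a R) = 1 then {a} else {})"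
    by auto
  finally show ?thesis by auto
qed

lemma onechild_labels_sub: "onechild_labels T \<subseteq> set_tree T"
  by (induction T) (auto simp: onechild_labels_Node)

lemma card_oc: "distinct (inorder T) \<Longrightarrow> card (onechild_labels T) = ocn T"
proof (induction T)
  case Leaf
  then show ?case by simp
next
  case (Node L a R)
  have d: "distinct (inorder L)" "distinct (inorder R)" "set_tree L \<inter> set_tree R = {}"
    "a \<notin> set_tree L" "a \<notin> set_tree R" using Node.prems by auto
  have f: "finite (onechild_labels L)" "finite (onechild_labels R)"
    using onechild_labels_sub finite_subset finite_set_tree by metis+
  have "onechild_labels L \<inter> onechild_labels R = {}"
    using d(3) onechild_labels_sub[of L] onechild_labels_sub[of R] by auto
  moreover have "a \<notin> onechild_labels L \<union> onechild_labels R"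
    using d(4,5) onechild_labels_sub[of L] onechild_labels_sub[of R] by auto
  ultimately show ?case using Node.IH d f unfolding onechild_labels_Node
    by (simp add: card_Un_disjoint)
qed

fun rk :: "'a tree \<Rightarrow> 'a \<Rightarrow> nat" where
  "rk Leaf x = 0"
| "rk (Node L a R) x = (if x \<in> set_tree L then rk L x else if x = a then ocn L
     else ocn L + (if nchildren (Node L a R) = 1 then 1 else 0) + rk R x)"

lemma length_filter_distinct: "distinct xs \<Longrightarrow> length (filter P xs) = card {x \<in> set xs. P x}"
  by (metis distinct_card distinct_filter set_filter)

lemma oc_rank_rk:
  "distinct (inorder T) \<Longrightarrow> x \<in> set_tree T \<Longrightarrow>
    length (filter (\<lambda>b. b \<in> onechild_labels T) (takeWhile (\<lambda>b. b \<noteq> x) (inorder T))) = rk T x"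
proof (induction T)
  case Leaf
  then show ?case by simp
next
  case (Node L a R)
  let ?OC = "onechild_labels (Node L a R)"
  have d: "distinct (inorder L)" "distinct (inorder R)" "set_tree L \<inter> set_tree R = {}"
    "a \<notin> set_tree L" "a \<notin> set_tree R" using Node.prems by auto
  have sL: "\<And>b. b \<in> set_tree L \<Longrightarrow> b \<in> ?OC \<longleftrightarrow> b \<in> onechild_labels L"
    using d onechild_labels_sub[of L] onechild_labels_sub[of R]
    unfolding onechild_labels_Node by auto
  have sR: "\<And>b. b \<in> set_tree R \<Longrightarrow> b \<in> ?OC \<longleftrightarrow> b \<in> onechild_labels R"
    using d onechild_labels_sub[of L] onechild_labels_sub[of R]
    unfolding onechild_labels_Node by auto
  have sa: "a \<in> ?OC \<longleftrightarrow> nchildren (Node L a R) = 1"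
    using d onechild_labels_sub[of L] onechild_labels_sub[of R]
    unfolding onechild_labels_Node by auto
  have fL: "length (filter (\<lambda>b. b \<in> ?OC) (inorder L)) = ocn L"
  proof -
    have "filter (\<lambda>b. b \<in> ?OC) (inorder L) = filter (\<lambda>b. b \<in> onechild_labels L) (inorder L)"
      using sL by (intro filter_cong) auto
    then have "length (filter (\<lambda>b. b \<in> ?OC) (inorder L)) = card {b \<in> set_tree L. b \<in> onechild_labels L}"
      using length_filter_distinct[OF d(1)] by simp
    also have "{b \<in> set_tree L. b \<in> onechild_labels L} = onechild_labels L"
      using onechild_labels_sub[of L] by auto
    finally show ?thesis using card_oc[OF d(1)] by simp
  qed
  show ?case
  proof (cases "x \<in> set_tree L")
    case True
    have tw: "takeWhile (\<lambda>b. b \<noteq> x) (inorder (Node L a R)) = takeWhile (\<lambda>b. b \<noteq> x) (inorder L)"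
      using True by (simp add: takeWhile_append1)
    have "set (takeWhile (\<lambda>b. b \<noteq> x) (inorder L)) \<subseteq> set_tree L"
      using set_takeWhileD by fastforce
    then have "filter (\<lambda>b. b \<in> ?OC) (takeWhile (\<lambda>b. b \<noteq> x) (inorder L)) =
       filter (\<lambda>b. b \<in> onechild_labels L) (takeWhile (\<lambda>b. b \<noteq> x) (inorder L))"
      using sL by (intro filter_cong) auto
    then show ?thesis using tw Node.IH(1)[OF d(1) True] True by simp
  next
    case False
    show ?thesis
    proof (cases "x = a")
      case True
      have "takeWhile (\<lambda>b. b \<noteq> x) (inorder L @ a # inorder R) = inorder L"
        using True d(4) by (intro tw_app) auto
      then show ?thesis using fL True False by simp
    next
      case xa: False
      then have xR: "x \<in> set_tree R" using Node.prems(2) False by simp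
      have tw0: "takeWhile (\<lambda>b. b \<noteq> x) (inorder L @ a # inorder R) =
          inorder L @ a # takeWhile (\<lambda>b. b \<noteq> x) (inorder R)"
        by (subst takeWhile_append2) (use False xa in auto)
      then have tw: "takeWhile (\<lambda>b. b \<noteq> x) (inorder (Node L a R)) =
          inorder L @ a # takeWhile (\<lambda>b. b \<noteq> x) (inorder R)" by simp
      have "set (takeWhile (\<lambda>b. b \<noteq> x) (inorder R)) \<subseteq> set_tree R"
        using set_takeWhileD by fastforce
      then have "filter (\<lambda>b. b \<in> ?OC) (takeWhile (\<lambda>b. b \<noteq> x) (inorder R)) =
         filter (\<lambda>b. b \<in> onechild_labels R) (takeWhile (\<lambda>b. b \<noteq> x) (inorder R))"
        using sR by (intro filter_cong) auto
      then show ?thesis using tw Node.IH(2)[OF d(2) xR] fL sa False xa by simp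
    qed
  qed
qed

fun condG :: "('a tree \<Rightarrow> nat \<Rightarrow> bool) \<Rightarrow> nat \<Rightarrow> 'a tree \<Rightarrow> bool" where
  "condG Q c Leaf = True"
| "condG Q c (Node L a R) = (Q (Node L a R) (c + ocn L) \<and> condG Q c L \<and>
     condG Q (c + ocn L + (if nchildren (Node L a R) = 1 then 1 else 0)) R)"

lemma root_in_set: "s \<in> tnodes T \<Longrightarrow> root_label s \<in> set_tree T"
proof -
  assume "s \<in> tnodes T"
  then have "s \<noteq> Leaf" "set_tree s \<subseteq> set_tree T" using tnodes_sub by auto
  then show ?thesis by (cases s) auto
qed

lemma condG_iff:
  "distinct (inorder T) \<Longrightarrow> (\<forall>s\<in>tnodes T. Q s (c + rk T (root_label s))) \<longleftrightarrow> condG Q c T"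
proof (induction T arbitrary: c)
  case Leaf
  then show ?case by simp
next
  case (Node L a R)
  have d: "distinct (inorder L)" "distinct (inorder R)" "set_tree L \<inter> set_tree R = {}"
    "a \<notin> set_tree L" "a \<notin> set_tree R" using Node.prems by auto
  have eL: "\<forall>s\<in>tnodes L. rk (Node L a R) (root_label s) = rk L (root_label s)"
    using root_in_set by fastforce
  have eR: "\<forall>s\<in>tnodes R. rk (Node L a R) (root_label s) = ocn L +
      (if nchildren (Node L a R) = 1 then 1 else 0) + rk R (root_label s)"
  proof
    fix s assume "s \<in> tnodes R"
    then have "root_label s \<in> set_tree R" by (rule root_in_set)
    then show "rk (Node L a R) (root_label s) = ocn L +
      (if nchildren (Node L a R) = 1 then 1 else 0) + rk R (root_label s)" using d by auto
  qed
  let ?T = "Node L a R"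
  let ?e = "(if nchildren (Node L a R) = 1 then 1 else 0)"
  have gen: "(\<forall>s\<in>tnodes ?T. P s) \<longleftrightarrow> P ?T \<and> (\<forall>s\<in>tnodes L. P s) \<and> (\<forall>s\<in>tnodes R. P s)" for P
    by auto
  have e1: "(\<forall>s\<in>tnodes L. Q s (c + rk ?T (root_label s))) \<longleftrightarrow> (\<forall>s\<in>tnodes L. Q s (c + rk L (root_label s)))"
    using eL by (intro ball_cong) auto
  have e2: "(\<forall>s\<in>tnodes R. Q s (c + rk ?T (root_label s))) \<longleftrightarrow> (\<forall>s\<in>tnodes R. Q s ((c + ocn L + ?e) + rk R (root_label s)))"
    using eR by (intro ball_cong) (auto simp: add.assoc)
  have e3: "rk ?T (root_label ?T) = ocn L" using d(4) by simp
  have "(\<forall>s\<in>tnodes (Node L a R). Q s (c + rk (Node L a R) (root_label s))) \<longleftrightarrow>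
     Q (Node L a R) (c + ocn L) \<and> (\<forall>s\<in>tnodes L. Q s (c + rk L (root_label s))) \<and>
     (\<forall>s\<in>tnodes R. Q s ((c + ocn L + ?e) + rk R (root_label s)))"
    using gen[of "\<lambda>s. Q s (c + rk ?T (root_label s))"] e1 e2 e3 by (simp only: tree.sel)
  then show ?case using Node.IH(1)[OF d(1)] Node.IH(2)[OF d(2)] by simp
qed

fun cntN :: "('a tree \<Rightarrow> bool) \<Rightarrow> 'a tree \<Rightarrow> nat" where
  "cntN P Leaf = 0"
| "cntN P (Node L a R) = (if P (Node L a R) then 1 else 0) + cntN P L + cntN P R"

lemma card_tnodes: "distinct (inorder T) \<Longrightarrow> card {s \<in> tnodes T. P s} = cntN P T"
proof (induction T)
  case Leaf
  then show ?case by simp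
next
  case (Node L a R)
  have d: "distinct (inorder L)" "distinct (inorder R)" "set_tree L \<inter> set_tree R = {}"
    using Node.prems by auto
  have n1: "Node L a R \<notin> tnodes L \<union> tnodes R"
    using tnodes_sub[of "Node L a R" L] tnodes_sub[of "Node L a R" R] by auto
  have n2: "tnodes L \<inter> tnodes R = {}"
  proof (rule ccontr)
    assume "tnodes L \<inter> tnodes R \<noteq> {}"
    then obtain s where "s \<in> tnodes L" "s \<in> tnodes R" by auto
    then have "root_label s \<in> set_tree L" "root_label s \<in> set_tree R" using root_in_set by auto
    then show False using d(3) by auto
  qed
  have "{s \<in> tnodes (Node L a R). P s} = (if P (Node L a R) then {Node L a R} else {}) \<union>
      {s \<in> tnodes L. P s} \<union> {s \<in> tnodes R. P s}" by auto
  moreover have "finite {s \<in> tnodes L. P s}" by (rule finite_subset[OF _ tnodes_finite[of L]]) auto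
  moreover have "finite {s \<in> tnodes R. P s}" by (rule finite_subset[OF _ tnodes_finite[of R]]) auto
  ultimately show ?case using n1 n2 Node.IH d
    by (simp add: card_Un_disjoint disjoint_iff)
qed


section \<open>Shapes and sum decompositions\<close>

definition sh :: "int list \<Rightarrow> unit tree" where
  "sh w = map_tree (\<lambda>_. ()) (hr w)"

lemma sh_Leaf_iff[simp]: "sh w = Leaf \<longleftrightarrow> w = []"
  unfolding sh_def by (cases "hr w") auto

lemma size_sh[simp]: "size (sh w) = length w"
  unfolding sh_def by simp

lemma sh_single[simp]: "sh [v] = Node Leaf () Leaf"
  unfolding sh_def by simp

lemma sh_node: "hr w = Node L a R \<Longrightarrow> sh w = Node (map_tree (\<lambda>_. ()) L) () (map_tree (\<lambda>_. ()) R)"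
  unfolding sh_def by simp

lemma sum_sh_zero:
  assumes "card V \<noteq> size S"
  shows "(\<Sum>w\<in>perms V. if sh w = S then F w else (0::'a::comm_monoid_add)) = 0"
proof (rule sum.neutral, rule ballI)
  fix w assume "w \<in> perms V"
  then have "length w = card V" by (rule length_perms)
  then show "(if sh w = S then F w else 0) = 0" using assms by auto
qed

lemma perms_card1:
  assumes "finite V" "card V = 1"
  obtains v where "V = {v}" "perms V = {[v]}"
  using assms by (metis card_1_singletonE perms_single)

lemma sh_comp:
  assumes fV: "finite V" and cV: "card V \<ge> 2" and A: "A \<subseteq> V - {Min V, Max V}"
    and l: "l \<in> perms A" and r: "r \<in> perms (V - {rt V b} - A)"
  shows "sh (l @ rt V b # r) = Node (sh l) () (sh r)"
proof -
  have "set l = A" "set r = V - {rt V b} - A" using l r unfolding perms_def by auto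
  then have "hr (l @ rt V b # r) = Node (hr l) (rt V b) (hr r)" using hr_comp[OF fV cV A] by blast
  then show ?thesis unfolding sh_def by simp
qed

lemma sum_if_prod:
  "(\<Sum>l\<in>X. \<Sum>r\<in>Y. if P l \<and> Q r then f l * g r else (0::'a::comm_semiring_1)) =
   (\<Sum>l\<in>X. if P l then f l else 0) * (\<Sum>r\<in>Y. if Q r then g r else 0)"
  by (simp add: sum_product if_distrib if_distribR) (intro sum.cong refl, auto)

lemma dec2:
  fixes F :: "int list \<Rightarrow> 'a::comm_semiring_1"
  assumes fV: "finite V" and cV: "card V \<ge> 2"
    and F: "\<And>b A l r. A \<subseteq> V - {Min V, Max V} \<Longrightarrow> l \<in> perms A \<Longrightarrow> r \<in> perms (V - {rt V b} - A) \<Longrightarrow>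
      sh l = L \<Longrightarrow> sh r = R \<Longrightarrow> F (l @ rt V b # r) = Fl b l * Fr b r"
  shows "(\<Sum>w\<in>perms V. if sh w = Node L () R then F w else 0) =
    (\<Sum>b\<in>UNIV. \<Sum>A\<in>Pow (V - {Min V, Max V}).
       (\<Sum>l\<in>perms A. if sh l = L then Fl b l else 0) *
       (\<Sum>r\<in>perms (V - {rt V b} - A). if sh r = R then Fr b r else 0))"
proof -
  have "(\<Sum>w\<in>perms V. if sh w = Node L () R then F w else 0) =
    (\<Sum>b\<in>UNIV. \<Sum>A\<in>Pow (V - {Min V, Max V}). \<Sum>l\<in>perms A. \<Sum>r\<in>perms (V - {rt V b} - A).
       if sh (l @ rt V b # r) = Node L () R then F (l @ rt V b # r) else 0)"
    by (rule sum_perms_dec[OF fV cV])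
  also have "\<dots> = (\<Sum>b\<in>UNIV. \<Sum>A\<in>Pow (V - {Min V, Max V}). \<Sum>l\<in>perms A. \<Sum>r\<in>perms (V - {rt V b} - A).
       if sh l = L \<and> sh r = R then Fl b l * Fr b r else 0)"
  proof (intro sum.cong refl)
    fix b A l r assume A: "A \<in> Pow (V - {Min V, Max V})" and l: "l \<in> perms A"
      and r: "r \<in> perms (V - {rt V b} - A)"
    have "sh (l @ rt V b # r) = Node (sh l) () (sh r)" using sh_comp[OF fV cV _ l r] A by auto
    then show "(if sh (l @ rt V b # r) = Node L () R then F (l @ rt V b # r) else 0) =
       (if sh l = L \<and> sh r = R then Fl b l * Fr b r else 0)"
      using F[where b=b and A=A and l=l and r=r] A l r by auto
  qed
  also have "\<dots> = (\<Sum>b\<in>UNIV. \<Sum>A\<in>Pow (V - {Min V, Max V}).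
       (\<Sum>l\<in>perms A. if sh l = L then Fl b l else 0) *
       (\<Sum>r\<in>perms (V - {rt V b} - A). if sh r = R then Fr b r else 0))"
    by (simp only: sum_if_prod)
  finally show ?thesis .
qed

lemma sum_Pow_empty:
  assumes "finite X"
  shows "(\<Sum>A\<in>Pow X. \<Sum>l\<in>perms A. if l = [] then G A l else (0::'a::comm_monoid_add)) = G {} []"
proof -
  have "(\<Sum>l\<in>perms A. if l = [] then G A l else 0) = (if A = {} then G A [] else 0)" if "A \<in> Pow X" for A
  proof (cases "A = {}")
    case True
    then show ?thesis by simp
  next
    case False
    then have "[] \<notin> perms A" unfolding perms_def by auto
    then have "(\<Sum>l\<in>perms A. if l = [] then G A l else 0) = 0" by (intro sum.neutral) auto
    then show ?thesis using False by simp
  qed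
  then have "(\<Sum>A\<in>Pow X. \<Sum>l\<in>perms A. if l = [] then G A l else 0) =
     (\<Sum>A\<in>Pow X. if A = {} then G A [] else 0)" by (intro sum.cong) auto
  also have "\<dots> = G {} []" using assms by (simp add: sum.delta)
  finally show ?thesis .
qed

lemma dec1:
  fixes F :: "int list \<Rightarrow> 'a::comm_semiring_1"
  assumes fV: "finite V" and cV: "card V \<ge> 2"
    and F: "\<And>b r. r \<in> perms (V - {rt V b}) \<Longrightarrow> sh r = R \<Longrightarrow> F (rt V b # r) = Fr b r"
  shows "(\<Sum>w\<in>perms V. if sh w = Node Leaf () R then F w else 0) =
    (\<Sum>b\<in>UNIV. \<Sum>r\<in>perms (V - {rt V b}). if sh r = R then Fr b r else 0)"
proof -
  have fX: "finite (V - {Min V, Max V})" using fV by simp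
  have "(\<Sum>w\<in>perms V. if sh w = Node Leaf () R then F w else 0) =
    (\<Sum>b\<in>UNIV. \<Sum>A\<in>Pow (V - {Min V, Max V}). \<Sum>l\<in>perms A. \<Sum>r\<in>perms (V - {rt V b} - A).
       if sh (l @ rt V b # r) = Node Leaf () R then F (l @ rt V b # r) else 0)"
    by (rule sum_perms_dec[OF fV cV])
  also have "\<dots> = (\<Sum>b\<in>UNIV. \<Sum>A\<in>Pow (V - {Min V, Max V}). \<Sum>l\<in>perms A.
       if l = [] then (\<Sum>r\<in>perms (V - {rt V b} - A). if sh r = R then F (l @ rt V b # r) else 0) else 0)"
  proof (intro sum.cong refl)
    fix b A l assume A: "A \<in> Pow (V - {Min V, Max V})" and l: "l \<in> perms A"
    have "(if sh (l @ rt V b # r) = Node Leaf () R then F (l @ rt V b # r) else 0) =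
        (if l = [] then (if sh r = R then F (l @ rt V b # r) else 0) else 0)"
      if r: "r \<in> perms (V - {rt V b} - A)" for r
      using sh_comp[OF fV cV _ l r] A by auto
    then show "(\<Sum>r\<in>perms (V - {rt V b} - A). if sh (l @ rt V b # r) = Node Leaf () R then F (l @ rt V b # r) else 0) =
       (if l = [] then (\<Sum>r\<in>perms (V - {rt V b} - A). if sh r = R then F (l @ rt V b # r) else 0) else 0)"
      by (cases "l = []") (auto intro: sum.neutral)
  qed
  also have "\<dots> = (\<Sum>b\<in>UNIV. \<Sum>r\<in>perms (V - {rt V b} - {}). if sh r = R then F ([] @ rt V b # r) else 0)"
    by (rule sum.cong[OF refl], rule sum_Pow_empty[OF fX])
  also have "\<dots> = (\<Sum>b\<in>UNIV. \<Sum>r\<in>perms (V - {rt V b}). if sh r = R then F (rt V b # r) else 0)"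
    by (simp cong: if_cong)
  also have "\<dots> = (\<Sum>b\<in>UNIV. \<Sum>r\<in>perms (V - {rt V b}). if sh r = R then Fr b r else 0)"
    using F by (intro sum.cong refl) auto
  finally show ?thesis .
qed

lemma dec0:
  assumes fV: "finite V" and cV: "card V \<ge> 2"
  shows "(\<Sum>w\<in>perms V. if sh w = Node L () Leaf then F w else (0::'a::comm_monoid_add)) = 0"
proof (rule sum.neutral, rule ballI)
  fix w assume w: "w \<in> perms V"
  then have dw: "distinct w" and len: "length w \<ge> 2" using length_perms[OF w] cV unfolding perms_def by auto
  then have "w \<noteq> []" by auto
  then obtain l x r where d: "w = l @ x # r" "x = Min (set w) \<or> x = Max (set w)"
      "Min (set w) \<notin> set l" "Max (set w) \<notin> set l" "hr w = Node (hr l) x (hr r)"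
    using hr_dec2 by metis
  have "r \<noteq> []" using dec_facts[OF dw d(1-4) len] by simp
  then have "sh w \<noteq> Node L () Leaf" using sh_node[OF d(5)] by (cases "hr r") auto
  then show "(if sh w = Node L () Leaf then F w else 0) = 0" by simp
qed

lemma card_compl:
  assumes fV: "finite V" and cV: "card V \<ge> 2" and A: "A \<subseteq> V - {Min V, Max V}"
  shows "card (V - {rt V b} - A) = card V - 1 - card A"
proof -
  have ne: "V \<noteq> {}" using cV by auto
  have rV: "rt V b \<in> V" by (rule rt_in[OF fV ne])
  have rA: "rt V b \<notin> A" using A unfolding rt_def by auto
  have fA: "finite A" using A fV finite_subset by blast
  have "V - {rt V b} - A = (V - {rt V b}) - A" by simp
  moreover have "A \<subseteq> V - {rt V b}" using A rA by auto
  ultimately have "card (V - {rt V b} - A) = card (V - {rt V b}) - card A"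
    using card_Diff_subset[OF fA] by simp
  then show ?thesis using rV fV by (simp add: card_Diff_singleton)
qed

lemma card_Min_Max:
  assumes fV: "finite V" and cV: "card V \<ge> 2"
  shows "card (V - {Min V, Max V}) = card V - 2"
proof -
  have ne: "V \<noteq> {}" using cV by auto
  have "Min V \<in> V" "Max V \<in> V" "Min V \<noteq> Max V" using fV ne Min_ne_Max[OF fV cV] by auto
  then show ?thesis using fV by (simp add: card_Diff_subset)
qed

lemma sum_Pow_card:
  assumes "finite X"
  shows "(\<Sum>A\<in>Pow X. if card A = k then c else (0::'a::comm_semiring_1)) = of_nat (card X choose k) * c"
proof -
  have "(\<Sum>A\<in>Pow X. if card A = k then c else 0) = (\<Sum>A\<in>{A \<in> Pow X. card A = k}. c)"
    using assms by (simp add: sum.inter_filter[symmetric])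
  also have "\<dots> = of_nat (card {A \<in> Pow X. card A = k}) * c" by simp
  also have "{A \<in> Pow X. card A = k} = {A. A \<subseteq> X \<and> card A = k}" by auto
  also have "card \<dots> = card X choose k" using n_subsets[OF assms] by simp
  finally show ?thesis .
qed

lemma sum_bool: "(\<Sum>b\<in>(UNIV::bool set). f b) = f True + f False"
  by (simp add: UNIV_bool add.commute)


section \<open>Shape statistics and closed forms\<close>

fun two :: "'a tree \<Rightarrow> nat" where
  "two Leaf = 0"
| "two (Node L a R) = two L + two R + (if L \<noteq> Leaf \<and> R \<noteq> Leaf then 1 else 0)"

fun inn :: "'a tree \<Rightarrow> nat" where
  "inn Leaf = 0"
| "inn (Node L a R) = inn L + inn R + (if L \<noteq> Leaf \<or> R \<noteq> Leaf then 1 else 0)"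

lemma map_tree_Leaf_iff[simp]: "map_tree f T = Leaf \<longleftrightarrow> T = Leaf"
  by (cases T) auto

lemma ocn_map[simp]: "ocn (map_tree f T) = ocn T"
  by (induction T) auto

lemma ocn_sh: "ocn (sh w) = ocn (hr w)"
  unfolding sh_def by simp

fun h :: "unit tree \<Rightarrow> nat" where
  "h Leaf = 1"
| "h (Node L u R) = (if L = Leaf then (if R = Leaf then 1 else h R) else if R = Leaf then 0
     else ((size L + size R - 1) choose size L) * h L * h R)"

fun z :: "bool \<Rightarrow> int set \<Rightarrow> unit tree \<Rightarrow> nat" where
  "z s V Leaf = 0"
| "z s V (Node L u R) = (if card V \<noteq> size L + size R + 1 then 0 else
     if L = Leaf then (if R = Leaf then (if V = {0} then 1 else 0) else (if rt V (\<not> s) = 0 then h R else 0))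
     else if R = Leaf then 0
     else (\<Sum>A\<in>Pow (V - {Min V, Max V}). z s A L * h R))"

fun ev :: "nat \<Rightarrow> nat \<Rightarrow> nat" where
  "ev c 0 = 0"
| "ev c (Suc k) = (if even (c + 1) then 1 else 0) + ev (c + 1) k"

lemma ev_add: "ev c (a + b) = ev c a + ev (c + a) b"
  by (induction a arbitrary: c) (auto simp: add.assoc)

lemma ev_0: "ev 0 k = k div 2"
proof -
  have "ev c k = (if even c then k div 2 else (k + 1) div 2)" for c
    by (induction k arbitrary: c) auto
  then show ?thesis by simp
qed

definition nodeT :: "bool \<Rightarrow> int tree \<Rightarrow> bool" where
  "nodeT s T = (if s then is_max_node T else is_min_node T)"

definition Qs :: "bool \<Rightarrow> int tree \<Rightarrow> nat \<Rightarrow> bool" where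
  "Qs s T k = ((nchildren T = 2 \<longrightarrow> nodeT s T) \<and> (nodeT s T \<and> nchildren T = 1 \<longrightarrow> even (k + 1)))"

definition fu :: "int list \<Rightarrow> bool" where
  "fu w = (w ! 0 < w ! 1)"

definition fuc :: "bool \<Rightarrow> int list \<Rightarrow> bool" where
  "fuc b w = (if length w = 1 then b else fu w)"

definition WA :: "'a::comm_ring_1 \<Rightarrow> bool \<Rightarrow> int set \<Rightarrow> unit tree \<Rightarrow> 'a" where
  "WA x a V S = (\<Sum>w\<in>perms V. if sh w = S then x ^ tpT (Some a) (hr w) None else 0)"

definition WC :: "'a::comm_ring_1 \<Rightarrow> bool \<Rightarrow> int set \<Rightarrow> unit tree \<Rightarrow> 'a" where
  "WC x a V S = (\<Sum>w\<in>perms V. if sh w = S then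
      x ^ tpT (Some a) (hr w) (Some True) + x ^ tpT (Some a) (hr w) (Some False) else 0)"

definition RR :: "'a::comm_ring_1 \<Rightarrow> bool \<Rightarrow> nat \<Rightarrow> int set \<Rightarrow> unit tree \<Rightarrow> 'a" where
  "RR x s c V S = (\<Sum>w\<in>perms V. if sh w = S then
      (if condG (Qs s) c (hr w) then x ^ cntN (nodeT s) (hr w) else 0) else 0)"

definition WB :: "'a::comm_ring_1 \<Rightarrow> bool \<Rightarrow> int set \<Rightarrow> unit tree \<Rightarrow> 'a" where
  "WB x s V S = (\<Sum>b'\<in>UNIV. \<Sum>w\<in>perms V. if sh w = S then
      (if hd w = 0 \<and> fuc b' w = s then x ^ tpT None (hr w) (Some b') else 0) else 0)"

definition WT :: "'a::comm_ring_1 \<Rightarrow> bool \<Rightarrow> int set \<Rightarrow> unit tree \<Rightarrow> 'a" where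
  "WT x s V S = (\<Sum>w\<in>perms V. if sh w = S then
      (if hd w = 0 \<and> fu w = s then x ^ tpT None (hr w) None else 0) else 0)"

definition RT :: "'a::comm_ring_1 \<Rightarrow> bool \<Rightarrow> int set \<Rightarrow> unit tree \<Rightarrow> 'a" where
  "RT x s V S = (\<Sum>w\<in>perms V. if sh w = S then
      (if hd w = 0 \<and> condG (Qs s) 0 (hr w) then x ^ cntN (nodeT s) (hr w) else 0) else 0)"

lemma comp_facts:
  assumes fV: "finite V" and cV: "card V \<ge> 2" and A: "A \<subseteq> V - {Min V, Max V}"
    and l: "l \<in> perms A" and r: "r \<in> perms (V - {rt V b} - A)"
  shows "hr (l @ rt V b # r) = Node (hr l) (rt V b) (hr r)" "r \<noteq> []"
    "tpT al (hr (l @ rt V b # r)) be = (if l = [] then (if al = Some (\<not> b) then 1 else 0) + tpT (Some b) (hr r) be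
        else tpT al (hr l) (Some b) + 1 + tpT (Some b) (hr r) be)"
    "nodeT s (hr (l @ rt V b # r)) = (b = s)"
    "nchildren (hr (l @ rt V b # r)) = (if l = [] then 1 else 2)"
    "hd (l @ rt V b # r) = (if l = [] then rt V b else hd l)"
    "fu (l @ rt V b # r) = (if l = [] then \<not> b else fuc b l)"
    "ocn (hr l) = ocn (sh l)"
proof -
  have sl: "set l = A" and sr: "set r = V - {rt V b} - A" and dl: "distinct l"
    using l r unfolding perms_def by auto
  note hc = hr_comp[OF fV cV A sl sr]
  show e1: "hr (l @ rt V b # r) = Node (hr l) (rt V b) (hr r)" by (rule hc(1))
  show rne: "r \<noteq> []" by (rule hc(2))
  have mm: "Min V \<noteq> Max V" using Min_ne_Max[OF fV cV] .
  have ne: "V \<noteq> {}" using cV by auto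
  have st: "set_tree (Node (hr l) (rt V b) (hr r)) = V" using hc(3) e1 by (metis set_tree_hr)
  have mb: "(rt V b = Max V) = b" using mm unfolding rt_def by auto
  show "tpT al (hr (l @ rt V b # r)) be = (if l = [] then (if al = Some (\<not> b) then 1 else 0) + tpT (Some b) (hr r) be
        else tpT al (hr l) (Some b) + 1 + tpT (Some b) (hr r) be)"
    unfolding e1 using rne st mb by (simp add: Let_def)
  have inner: "is_inner (Node (hr l) (rt V b) (hr r))" using rne unfolding is_inner_def by simp
  have mb2: "(rt V b = Min V) = (\<not> b)" using mm unfolding rt_def by auto
  show "nodeT s (hr (l @ rt V b # r)) = (b = s)"
    unfolding e1 nodeT_def is_max_node_def is_min_node_def using inner st mb mb2 by auto
  show "nchildren (hr (l @ rt V b # r)) = (if l = [] then 1 else 2)"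
    unfolding e1 using rne by simp
  show "hd (l @ rt V b # r) = (if l = [] then rt V b else hd l)" by (cases l) auto
  have hdr: "hd r \<in> set r" using rne by simp
  have fVr: "\<forall>v\<in>V. Min V \<le> v \<and> v \<le> Max V" using fV by auto
  show "fu (l @ rt V b # r) = (if l = [] then \<not> b else fuc b l)"
  proof (cases "l = []")
    case True
    have "hd r \<in> V" "hd r \<noteq> rt V b" using hdr sr by auto
    then have "fu (rt V b # r) = (\<not> b)"
      using rne fVr unfolding fu_def rt_def by (cases r) (auto simp: order.order_iff_strict)
    then show ?thesis using True by simp
  next
    case False
    show ?thesis
    proof (cases "length l = 1")
      case True
      then obtain v where lv: "l = [v]" by (metis One_nat_def length_0_conv length_Suc_conv)
      then have "v \<in> A" using sl by auto
      then have "Min V < v" "v < Max V" using A fVr by (auto simp: order.order_iff_strict)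
      then show ?thesis using lv unfolding fu_def fuc_def rt_def by auto
    next
      case False
      then have "length l \<ge> 2" using \<open>l \<noteq> []\<close> by (cases l) (auto simp: Suc_le_eq)
      then show ?thesis using \<open>l \<noteq> []\<close> False unfolding fu_def fuc_def by (simp add: nth_append)
    qed
  qed
  show "ocn (hr l) = ocn (sh l)" by (simp add: ocn_sh)
qed

lemma comb2:
  fixes P :: "bool \<Rightarrow> int set \<Rightarrow> 'a::comm_semiring_1"
  shows "(\<Sum>b\<in>UNIV. \<Sum>A\<in>X. P b A * (if card A = k then c else 0)) =
    (\<Sum>A\<in>X. if card A = k then c * (P True A + P False A) else 0)"
  by (simp add: sum_bool sum.distrib[symmetric] algebra_simps if_distrib if_distribR cong: if_cong)

lemma card_cond:
  assumes fV: "finite V" and cV: "card V \<ge> 2" and A: "A \<subseteq> V - {Min V, Max V}"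
    and sz: "card V = sL + sR + 1"
  shows "card (V - {rt V b} - A) = sR \<longleftrightarrow> card A = sL"
proof -
  have fX: "finite (V - {Min V, Max V})" using fV by simp
  have "card A \<le> card (V - {Min V, Max V})" using card_mono[OF fX A] .
  then have "card A \<le> card V - 2" using card_Min_Max[OF fV cV] by simp
  then show ?thesis using card_compl[OF fV cV A] sz by auto
qed

lemma sum_if_cmult:
  "(\<Sum>r\<in>X. if P r then c * f r else 0) = c * (\<Sum>r\<in>X. if P r then f r else (0::'a::comm_semiring_1))"
  unfolding sum_distrib_left by (rule sum.cong) auto

lemma sum_if_add:
  "(\<Sum>r\<in>X. if P r then f r + g r else 0) =
   (\<Sum>r\<in>X. if P r then f r else (0::'a::comm_semiring_1)) + (\<Sum>r\<in>X. if P r then g r else 0)"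
  unfolding sum.distrib[symmetric] by (rule sum.cong) auto

lemma pow3: "(y::'a::comm_semiring_1) ^ (a + b + 1 + 1) = y ^ (a + 1) * y ^ (b + 1)"
proof -
  have "a + b + 1 + 1 = (a + 1) + (b + 1)" by simp
  then show ?thesis by (simp only: power_add)
qed

lemma pow2: "(y::'a::comm_semiring_1) ^ (a + b + 1) = y * y ^ a * y ^ b"
proof -
  have "a + b + 1 = Suc (a + b)" by simp
  then show ?thesis by (simp only: power_Suc power_add mult.assoc)
qed

lemma WC_closed:
  fixes x :: "'a::comm_ring_1"
  assumes "finite V" "S \<noteq> Leaf"
  shows "WC x a V S = (if card V = size S then of_nat (h S) * x ^ two S * (1 + x) ^ (inn S + 1) else 0)"
  using assms
proof (induction S arbitrary: V a)
  case Leaf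
  then show ?case by simp
next
  case (Node L u R)
  have u: "u = ()" by simp
  let ?S = "Node L () R"
  have fV: "finite V" by (rule Node.prems(1))
  show ?case
  proof (cases "card V = size ?S")
    case False
    then show ?thesis unfolding WC_def u using sum_sh_zero[OF False] by simp
  next
    case True
    show ?thesis
    proof (cases "card V \<ge> 2")
      case False
      have "card V \<ge> 1" using True by simp
      then have c1: "card V = 1" using False by linarith
      then obtain v where V: "V = {v}" "perms V = {[v]}" using perms_card1 fV by metis
      have "size L + size R = 0" using True c1 by simp
      then have "L = Leaf \<and> R = Leaf" by (cases L; cases R) auto
      then have LR: "L = Leaf" "R = Leaf" by auto
      show ?thesis unfolding WC_def u using V LR by (cases a) auto
    next
      case c2: True
      show ?thesis
      proof (cases "L = Leaf")
        case Lt: True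
        then have Rn: "R \<noteq> Leaf" using True c2 by auto
        have cR: "card (V - {rt V b}) = size R" for b
        proof -
          have "V \<noteq> {}" using c2 by auto
          then have "rt V b \<in> V" by (rule rt_in[OF fV])
          then show ?thesis using True Lt fV by (simp add: card_Diff_singleton)
        qed
        define KR where "KR = of_nat (h R) * x ^ two R * (1 + x) ^ (inn R + 1)"
        have "WC x a V ?S = (\<Sum>b\<in>UNIV. \<Sum>r\<in>perms (V - {rt V b}). if sh r = R then
             x ^ (if a = (\<not> b) then 1 else 0) *
             (x ^ tpT (Some b) (hr r) (Some True) + x ^ tpT (Some b) (hr r) (Some False)) else 0)"
          unfolding WC_def Lt
        proof (rule dec1[OF fV c2])
          fix b r assume r: "r \<in> perms (V - {rt V b})"
          have r': "r \<in> perms (V - {rt V b} - {})" using r by simp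
          note cf = comp_facts[OF fV c2 _ _ r', of "[]"]
          show "x ^ tpT (Some a) (hr (rt V b # r)) (Some True) + x ^ tpT (Some a) (hr (rt V b # r)) (Some False) =
             x ^ (if a = (\<not> b) then 1 else 0) *
             (x ^ tpT (Some b) (hr r) (Some True) + x ^ tpT (Some b) (hr r) (Some False))"
            using cf(3)[of "Some a" "Some True"] cf(3)[of "Some a" "Some False"]
            by (simp add: power_add distrib_left)
        qed
        also have "\<dots> = (\<Sum>b\<in>UNIV. x ^ (if a = (\<not> b) then 1 else 0) * WC x b (V - {rt V b}) R)"
          unfolding WC_def by (intro sum.cong refl) (rule sum_if_cmult)
        also have "\<dots> = (\<Sum>b\<in>UNIV. x ^ (if a = (\<not> b) then 1 else 0) * KR)"
          using Node.IH(2)[OF _ Rn] fV cR unfolding KR_def by simp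
        also have "\<dots> = (1 + x) * KR" by (cases a) (simp_all add: sum_bool algebra_simps)
        finally have eq: "WC x a V ?S = (1 + x) * KR" .
        have "of_nat (h ?S) * x ^ two ?S * (1 + x) ^ (inn ?S + 1) = (1 + x) * KR"
          unfolding KR_def using Lt Rn by (simp add: mult_ac)
        then show ?thesis using eq True unfolding u by simp
      next
        case Ln: False
        show ?thesis
        proof (cases "R = Leaf")
          case Rt: True
          show ?thesis unfolding WC_def u Rt using dec0[OF fV c2] Ln Rt by simp
        next
          case Rn: False
          define KR where "KR = of_nat (h R) * x ^ two R * (1 + x) ^ (inn R + 1)"
          define KL where "KL = of_nat (h L) * x ^ two L * (1 + x) ^ (inn L + 1)"
          define X where "X = V - {Min V, Max V}"
          have fX: "finite X" using fV X_def by simp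
          have "WC x a V ?S = (\<Sum>b\<in>UNIV. \<Sum>A\<in>Pow X.
             (\<Sum>l\<in>perms A. if sh l = L then x ^ tpT (Some a) (hr l) (Some b) else 0) *
             (\<Sum>r\<in>perms (V - {rt V b} - A). if sh r = R then x *
               (x ^ tpT (Some b) (hr r) (Some True) + x ^ tpT (Some b) (hr r) (Some False)) else 0))"
            unfolding WC_def X_def
          proof (rule dec2[OF fV c2])
            fix b A l r assume A: "A \<subseteq> V - {Min V, Max V}" and l: "l \<in> perms A"
              and r: "r \<in> perms (V - {rt V b} - A)" and sl: "sh l = L"
            have lne: "l \<noteq> []" using sl Ln by auto
            note cf = comp_facts[OF fV c2 A l r]
            show "x ^ tpT (Some a) (hr (l @ rt V b # r)) (Some True) + x ^ tpT (Some a) (hr (l @ rt V b # r)) (Some False) =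
              x ^ tpT (Some a) (hr l) (Some b) * (x * (x ^ tpT (Some b) (hr r) (Some True) + x ^ tpT (Some b) (hr r) (Some False)))"
              using cf(3)[of "Some a" "Some True"] cf(3)[of "Some a" "Some False"] lne
              by (simp add: power_add distrib_left algebra_simps)
          qed
          also have "\<dots> = (\<Sum>b\<in>UNIV. \<Sum>A\<in>Pow X.
             (\<Sum>l\<in>perms A. if sh l = L then x ^ tpT (Some a) (hr l) (Some b) else 0) *
             (if card A = size L then x * KR else 0))"
          proof (intro sum.cong refl)
            fix b A assume "A \<in> Pow X"
            then have A: "A \<subseteq> V - {Min V, Max V}" using X_def by simp
            have "(\<Sum>r\<in>perms (V - {rt V b} - A). if sh r = R then x *
               (x ^ tpT (Some b) (hr r) (Some True) + x ^ tpT (Some b) (hr r) (Some False)) else 0) =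
               x * WC x b (V - {rt V b} - A) R"
              unfolding WC_def by (simp add: sum_distrib_left if_distrib if_distribR cong: if_cong)
            also have "\<dots> = (if card A = size L then x * KR else 0)"
              using Node.IH(2)[OF _ Rn, of "V - {rt V b} - A" b] fV card_cond[OF fV c2 A, of "size L" "size R" b] True
              unfolding KR_def by auto
            finally show "(\<Sum>l\<in>perms A. if sh l = L then x ^ tpT (Some a) (hr l) (Some b) else 0) *
              (\<Sum>r\<in>perms (V - {rt V b} - A). if sh r = R then x *
               (x ^ tpT (Some b) (hr r) (Some True) + x ^ tpT (Some b) (hr r) (Some False)) else 0) =
              (\<Sum>l\<in>perms A. if sh l = L then x ^ tpT (Some a) (hr l) (Some b) else 0) *
              (if card A = size L then x * KR else 0)"
              by simp
          qed
          also have "\<dots> = (\<Sum>A\<in>Pow X. if card A = size L then x * KR * WC x a A L else 0)"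
            by (simp only: comb2 WC_def sum_if_add)
          also have "\<dots> = (\<Sum>A\<in>Pow X. if card A = size L then x * KR * KL else 0)"
          proof (intro sum.cong refl)
            fix A assume "A \<in> Pow X"
            then have "finite A" using fX finite_subset by auto
            then show "(if card A = size L then x * KR * WC x a A L else 0) = (if card A = size L then x * KR * KL else 0)"
              using Node.IH(1)[OF _ Ln, of A a] unfolding KL_def by simp
          qed
          also have "\<dots> = of_nat (card X choose size L) * (x * KR * KL)"
            by (rule sum_Pow_card[OF fX])
          finally have eq: "WC x a V ?S = of_nat (card X choose size L) * (x * KR * KL)" .
          have cX: "card X = size L + size R - 1" using card_Min_Max[OF fV c2] True unfolding X_def by simp
          have "of_nat (h ?S) * x ^ two ?S * (1 + x) ^ (inn ?S + 1) = of_nat (card X choose size L) * (x * KR * KL)"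
            unfolding KR_def KL_def cX using Ln Rn by (simp add: pow2 pow3 power_add of_nat_mult mult_ac)
          then show ?thesis using eq True unfolding u by simp
        qed
      qed
    qed
  qed
qed



lemma nodeT_comp:
  assumes fV: "finite V" and cV: "card V \<ge> 2" and A: "A \<subseteq> V - {Min V, Max V}"
    and l: "l \<in> perms A" and r: "r \<in> perms (V - {rt V b} - A)"
  shows "nodeT s (Node (hr l) (rt V b) (hr r)) = (b = s)"
  using comp_facts(1,4)[OF fV cV A l r] by metis

lemma WA_closed:
  fixes x :: "'a::comm_ring_1"
  assumes "finite V"
  shows "WA x a V S = (if card V = size S then of_nat (h S) * x ^ two S * (1 + x) ^ (inn S) else 0)"
  using assms
proof (induction S arbitrary: V a)
  case Leaf
  show ?case
  proof (cases "V = {}")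
    case True
    then show ?thesis unfolding WA_def by simp
  next
    case False
    then have c: "card V \<noteq> size (Leaf :: unit tree)" using Leaf.prems by simp
    show ?thesis unfolding WA_def using sum_sh_zero[OF c, of "\<lambda>w. x ^ tpT (Some a) (hr w) None"] c by simp
  qed
next
  case (Node L u R)
  have u: "u = ()" by simp
  let ?S = "Node L () R"
  have fV: "finite V" by (rule Node.prems(1))
  show ?case
  proof (cases "card V = size ?S")
    case False
    then show ?thesis unfolding WA_def u using sum_sh_zero[OF False] by simp
  next
    case True
    show ?thesis
    proof (cases "card V \<ge> 2")
      case False
      have "card V \<ge> 1" using True by simp
      then have c1: "card V = 1" using False by linarith
      then obtain v where V: "V = {v}" "perms V = {[v]}" using perms_card1 fV by metis
      have "size L + size R = 0" using True c1 by simp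
      then have "L = Leaf \<and> R = Leaf" by (cases L; cases R) auto
      then have LR: "L = Leaf" "R = Leaf" by auto
      show ?thesis unfolding WA_def u using V LR by simp
    next
      case c2: True
      show ?thesis
      proof (cases "L = Leaf")
        case Lt: True
        then have Rn: "R \<noteq> Leaf" using True c2 by auto
        have cR: "card (V - {rt V b}) = size R" for b
        proof -
          have "V \<noteq> {}" using c2 by auto
          then have "rt V b \<in> V" by (rule rt_in[OF fV])
          then show ?thesis using True Lt fV by (simp add: card_Diff_singleton)
        qed
        define KR where "KR = of_nat (h R) * x ^ two R * (1 + x) ^ (inn R)"
        have "WA x a V ?S = (\<Sum>b\<in>UNIV. \<Sum>r\<in>perms (V - {rt V b}). if sh r = R then
             x ^ (if a = (\<not> b) then 1 else 0) * x ^ tpT (Some b) (hr r) None else 0)"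
          unfolding WA_def Lt
        proof (rule dec1[OF fV c2])
          fix b r assume r: "r \<in> perms (V - {rt V b})"
          have r': "r \<in> perms (V - {rt V b} - {})" using r by simp
          note cf = comp_facts[OF fV c2 _ _ r', of "[]"]
          show "x ^ tpT (Some a) (hr (rt V b # r)) None =
             x ^ (if a = (\<not> b) then 1 else 0) * x ^ tpT (Some b) (hr r) None"
            using cf(3)[of "Some a" None] by (simp add: power_add)
        qed
        also have "\<dots> = (\<Sum>b\<in>UNIV. x ^ (if a = (\<not> b) then 1 else 0) * WA x b (V - {rt V b}) R)"
          unfolding WA_def by (intro sum.cong refl) (rule sum_if_cmult)
        also have "\<dots> = (\<Sum>b\<in>UNIV. x ^ (if a = (\<not> b) then 1 else 0) * KR)"
          using Node.IH(2) fV cR unfolding KR_def by simp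
        also have "\<dots> = (1 + x) * KR" by (cases a) (simp_all add: sum_bool algebra_simps)
        finally have eq: "WA x a V ?S = (1 + x) * KR" .
        have "of_nat (h ?S) * x ^ two ?S * (1 + x) ^ (inn ?S) = (1 + x) * KR"
          unfolding KR_def using Lt Rn by (simp add: mult_ac)
        then show ?thesis using eq True unfolding u by simp
      next
        case Ln: False
        show ?thesis
        proof (cases "R = Leaf")
          case Rt: True
          show ?thesis unfolding WA_def u Rt using dec0[OF fV c2] Ln Rt by simp
        next
          case Rn: False
          define KR where "KR = of_nat (h R) * x ^ two R * (1 + x) ^ (inn R)"
          define KL where "KL = of_nat (h L) * x ^ two L * (1 + x) ^ (inn L + 1)"
          define X where "X = V - {Min V, Max V}"
          have fX: "finite X" using fV X_def by simp
          have "WA x a V ?S = (\<Sum>b\<in>UNIV. \<Sum>A\<in>Pow X.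
             (\<Sum>l\<in>perms A. if sh l = L then x ^ tpT (Some a) (hr l) (Some b) else 0) *
             (\<Sum>r\<in>perms (V - {rt V b} - A). if sh r = R then x * x ^ tpT (Some b) (hr r) None else 0))"
            unfolding WA_def X_def
          proof (rule dec2[OF fV c2])
            fix b A l r assume A: "A \<subseteq> V - {Min V, Max V}" and l: "l \<in> perms A"
              and r: "r \<in> perms (V - {rt V b} - A)" and sl: "sh l = L"
            have lne: "l \<noteq> []" using sl Ln by auto
            note cf = comp_facts[OF fV c2 A l r]
            show "x ^ tpT (Some a) (hr (l @ rt V b # r)) None =
              x ^ tpT (Some a) (hr l) (Some b) * (x * x ^ tpT (Some b) (hr r) None)"
              using cf(3)[of "Some a" None] lne by (simp add: power_add mult_ac)
          qed
          also have "\<dots> = (\<Sum>b\<in>UNIV. \<Sum>A\<in>Pow X.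
             (\<Sum>l\<in>perms A. if sh l = L then x ^ tpT (Some a) (hr l) (Some b) else 0) *
             (if card A = size L then x * KR else 0))"
          proof (intro sum.cong refl)
            fix b A assume "A \<in> Pow X"
            then have A: "A \<subseteq> V - {Min V, Max V}" using X_def by simp
            have "(\<Sum>r\<in>perms (V - {rt V b} - A). if sh r = R then x * x ^ tpT (Some b) (hr r) None else 0) =
               x * WA x b (V - {rt V b} - A) R"
              unfolding WA_def by (rule sum_if_cmult)
            also have "\<dots> = (if card A = size L then x * KR else 0)"
              using Node.IH(2)[of "V - {rt V b} - A" b] fV card_cond[OF fV c2 A, of "size L" "size R" b] True
              unfolding KR_def by auto
            finally show "(\<Sum>l\<in>perms A. if sh l = L then x ^ tpT (Some a) (hr l) (Some b) else 0) *
              (\<Sum>r\<in>perms (V - {rt V b} - A). if sh r = R then x * x ^ tpT (Some b) (hr r) None else 0) =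
              (\<Sum>l\<in>perms A. if sh l = L then x ^ tpT (Some a) (hr l) (Some b) else 0) *
              (if card A = size L then x * KR else 0)"
              by simp
          qed
          also have "\<dots> = (\<Sum>A\<in>Pow X. if card A = size L then x * KR * WC x a A L else 0)"
            by (simp only: comb2 WC_def sum_if_add)
          also have "\<dots> = (\<Sum>A\<in>Pow X. if card A = size L then x * KR * KL else 0)"
          proof (intro sum.cong refl)
            fix A assume "A \<in> Pow X"
            then have "finite A" using fX finite_subset by auto
            then show "(if card A = size L then x * KR * WC x a A L else 0) = (if card A = size L then x * KR * KL else 0)"
              using WC_closed[of A L x a] Ln unfolding KL_def by simp
          qed
          also have "\<dots> = of_nat (card X choose size L) * (x * KR * KL)"
            by (rule sum_Pow_card[OF fX])
          finally have eq: "WA x a V ?S = of_nat (card X choose size L) * (x * KR * KL)" .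
          have cX: "card X = size L + size R - 1" using card_Min_Max[OF fV c2] True unfolding X_def by simp
          have "of_nat (h ?S) * x ^ two ?S * (1 + x) ^ (inn ?S) = of_nat (card X choose size L) * (x * KR * KL)"
            unfolding KR_def KL_def cX using Ln Rn by (simp add: power_add of_nat_mult mult_ac)
          then show ?thesis using eq True unfolding u by simp
        qed
      qed
    qed
  qed
qed


lemma node_leaf_stats:
  "nodeT s (Node Leaf v Leaf) = False" "Qs s (Node Leaf v Leaf) k = True"
  unfolding Qs_def nodeT_def is_max_node_def is_min_node_def is_inner_def by auto

lemma RR_closed:
  fixes x :: "'a::comm_ring_1"
  assumes "finite V"
  shows "RR x s c V S = (if card V = size S then of_nat (h S) * x ^ two S * (1 + x) ^ (ev c (ocn S)) else 0)"
  using assms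
proof (induction S arbitrary: V c)
  case Leaf
  show ?case
  proof (cases "V = {}")
    case True
    then show ?thesis unfolding RR_def by simp
  next
    case False
    then have c: "card V \<noteq> size (Leaf :: unit tree)" using Leaf.prems by simp
    show ?thesis unfolding RR_def
      using sum_sh_zero[OF c, of "\<lambda>w. if condG (Qs s) c (hr w) then x ^ cntN (nodeT s) (hr w) else 0"] c by simp
  qed
next
  case (Node L u R)
  have u: "u = ()" by simp
  let ?S = "Node L () R"
  have fV: "finite V" by (rule Node.prems(1))
  show ?case
  proof (cases "card V = size ?S")
    case False
    then show ?thesis unfolding RR_def u using sum_sh_zero[OF False] by simp
  next
    case True
    show ?thesis
    proof (cases "card V \<ge> 2")
      case False
      have "card V \<ge> 1" using True by simp
      then have c1: "card V = 1" using False by linarith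
      then obtain v where V: "V = {v}" "perms V = {[v]}" using perms_card1 fV by metis
      have "size L + size R = 0" using True c1 by simp
      then have "L = Leaf \<and> R = Leaf" by (cases L; cases R) auto
      then have LR: "L = Leaf" "R = Leaf" by auto
      have "RR x s c V ?S = 1" unfolding RR_def V(2) using LR by (simp add: node_leaf_stats)
      then show ?thesis using LR True unfolding u by simp
    next
      case c2: True
      show ?thesis
      proof (cases "L = Leaf")
        case Lt: True
        then have Rn: "R \<noteq> Leaf" using True c2 by auto
        have cR: "card (V - {rt V b}) = size R" for b
        proof -
          have "V \<noteq> {}" using c2 by auto
          then have "rt V b \<in> V" by (rule rt_in[OF fV])
          then show ?thesis using True Lt fV by (simp add: card_Diff_singleton)
        qed
        define KR where "KR = of_nat (h R) * x ^ two R * (1 + x) ^ (ev (c + 1) (ocn R))"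
        define cb where "cb = (\<lambda>b. if b = s \<longrightarrow> even (c + 1) then x ^ (if b = s then 1 else 0) else (0::'a))"
        have "RR x s c V ?S = (\<Sum>b\<in>UNIV. \<Sum>r\<in>perms (V - {rt V b}). if sh r = R then
             cb b * (if condG (Qs s) (c + 1) (hr r) then x ^ cntN (nodeT s) (hr r) else 0) else 0)"
          unfolding RR_def Lt
        proof (rule dec1[OF fV c2])
          fix b r assume r: "r \<in> perms (V - {rt V b})"
          have r': "r \<in> perms (V - {rt V b} - {})" using r by simp
          have e1: "hr (rt V b # r) = Node Leaf (rt V b) (hr r)" using comp_facts(1)[OF fV c2 _ _ r', of "[]"] by simp
          have rne: "r \<noteq> []" using comp_facts(2)[OF fV c2 _ _ r', of "[]"] by simp
          have nt: "nodeT s (Node Leaf (rt V b) (hr r)) = (b = s)" using nodeT_comp[OF fV c2 _ _ r', of "[]"] by simp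
          show "(if condG (Qs s) c (hr (rt V b # r)) then x ^ cntN (nodeT s) (hr (rt V b # r)) else 0) =
             cb b * (if condG (Qs s) (c + 1) (hr r) then x ^ cntN (nodeT s) (hr r) else 0)"
            unfolding e1 cb_def using nt rne by (simp add: Qs_def power_add)
        qed
        also have "\<dots> = (\<Sum>b\<in>UNIV. cb b * RR x s (c + 1) (V - {rt V b}) R)"
          unfolding RR_def by (intro sum.cong refl) (rule sum_if_cmult)
        also have "\<dots> = (\<Sum>b\<in>UNIV. cb b * KR)"
          using Node.IH(2) fV cR unfolding KR_def by simp
        also have "\<dots> = (1 + (if even (c + 1) then x else 0)) * KR"
          unfolding cb_def by (cases s) (simp_all add: sum_bool algebra_simps)
        finally have eq: "RR x s c V ?S = (1 + (if even (c + 1) then x else 0)) * KR" .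
        have "ocn ?S = Suc (ocn R)" using Lt Rn by simp
        then have "of_nat (h ?S) * x ^ two ?S * (1 + x) ^ (ev c (ocn ?S)) = (1 + (if even (c + 1) then x else 0)) * KR"
          unfolding KR_def using Lt Rn by (simp add: power_add mult_ac)
        then show ?thesis using eq True unfolding u by simp
      next
        case Ln: False
        show ?thesis
        proof (cases "R = Leaf")
          case Rt: True
          show ?thesis unfolding RR_def u Rt using dec0[OF fV c2] Ln Rt by simp
        next
          case Rn: False
          define KR where "KR = of_nat (h R) * x ^ two R * (1 + x) ^ (ev (c + ocn L) (ocn R))"
          define KL where "KL = of_nat (h L) * x ^ two L * (1 + x) ^ (ev c (ocn L))"
          define X where "X = V - {Min V, Max V}"
          define P where "P = (\<lambda>b A. \<Sum>l\<in>perms A. if sh l = L then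
             (if b = s \<and> condG (Qs s) c (hr l) then x ^ cntN (nodeT s) (hr l) else 0) else (0::'a))"
          have fX: "finite X" using fV X_def by simp
          have "RR x s c V ?S = (\<Sum>b\<in>UNIV. \<Sum>A\<in>Pow X. P b A *
             (\<Sum>r\<in>perms (V - {rt V b} - A). if sh r = R then
               (if condG (Qs s) (c + ocn L) (hr r) then x * x ^ cntN (nodeT s) (hr r) else 0) else 0))"
            unfolding RR_def X_def P_def
          proof (rule dec2[OF fV c2])
            fix b A l r assume A: "A \<subseteq> V - {Min V, Max V}" and l: "l \<in> perms A"
              and r: "r \<in> perms (V - {rt V b} - A)" and sl: "sh l = L"
            have lne: "l \<noteq> []" using sl Ln by auto
            note cf = comp_facts[OF fV c2 A l r]
            have nt: "nodeT s (Node (hr l) (rt V b) (hr r)) = (b = s)" using nodeT_comp[OF fV c2 A l r] .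
            have oc: "ocn (hr l) = ocn L" using sl ocn_sh by metis
            have hl: "hr l \<noteq> Leaf" "hr r \<noteq> Leaf" using lne cf(2) by auto
            show "(if condG (Qs s) c (hr (l @ rt V b # r)) then x ^ cntN (nodeT s) (hr (l @ rt V b # r)) else 0) =
              (if b = s \<and> condG (Qs s) c (hr l) then x ^ cntN (nodeT s) (hr l) else 0) *
              (if condG (Qs s) (c + ocn L) (hr r) then x * x ^ cntN (nodeT s) (hr r) else 0)"
              unfolding cf(1) using nt oc hl by (cases "b = s") (simp_all add: Qs_def power_add mult_ac)
          qed
          also have "\<dots> = (\<Sum>b\<in>UNIV. \<Sum>A\<in>Pow X. P b A * (if card A = size L then x * KR else 0))"
          proof (intro sum.cong refl)
            fix b A assume "A \<in> Pow X"
            then have A: "A \<subseteq> V - {Min V, Max V}" using X_def by simp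
            have "(\<Sum>r\<in>perms (V - {rt V b} - A). if sh r = R then
               (if condG (Qs s) (c + ocn L) (hr r) then x * x ^ cntN (nodeT s) (hr r) else 0) else 0) =
               x * RR x s (c + ocn L) (V - {rt V b} - A) R"
              unfolding RR_def sum_distrib_left by (rule sum.cong) auto
            also have "\<dots> = (if card A = size L then x * KR else 0)"
              using Node.IH(2)[of "V - {rt V b} - A" "c + ocn L"] fV card_cond[OF fV c2 A, of "size L" "size R" b] True
              unfolding KR_def by auto
            finally show "P b A * (\<Sum>r\<in>perms (V - {rt V b} - A). if sh r = R then
               (if condG (Qs s) (c + ocn L) (hr r) then x * x ^ cntN (nodeT s) (hr r) else 0) else 0) =
              P b A * (if card A = size L then x * KR else 0)" by simp
          qed
          also have "\<dots> = (\<Sum>A\<in>Pow X. if card A = size L then x * KR * (P True A + P False A) else 0)"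
            by (rule comb2)
          also have "\<dots> = (\<Sum>A\<in>Pow X. if card A = size L then x * KR * KL else 0)"
          proof (intro sum.cong refl)
            fix A assume "A \<in> Pow X"
            then have fA: "finite A" using fX finite_subset by auto
            have "P True A + P False A = RR x s c A L"
              unfolding P_def RR_def by (cases s) (simp_all cong: if_cong)
            then show "(if card A = size L then x * KR * (P True A + P False A) else 0) =
               (if card A = size L then x * KR * KL else 0)"
              using Node.IH(1)[OF fA, of c] unfolding KL_def by simp
          qed
          also have "\<dots> = of_nat (card X choose size L) * (x * KR * KL)"
            by (rule sum_Pow_card[OF fX])
          finally have eq: "RR x s c V ?S = of_nat (card X choose size L) * (x * KR * KL)" .
          have cX: "card X = size L + size R - 1" using card_Min_Max[OF fV c2] True unfolding X_def by simp
          have "ocn ?S = ocn L + ocn R" using Ln Rn by simp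
          then have "of_nat (h ?S) * x ^ two ?S * (1 + x) ^ (ev c (ocn ?S)) = of_nat (card X choose size L) * (x * KR * KL)"
            unfolding KR_def KL_def cX using Ln Rn by (simp add: ev_add power_add of_nat_mult mult_ac)
          then show ?thesis using eq True unfolding u by simp
        qed
      qed
    qed
  qed
qed


lemma z_card: "card A \<noteq> size L \<Longrightarrow> z s A L = 0"
  by (cases L) auto

lemma sum_z:
  fixes K :: "'a::comm_semiring_1"
  assumes "\<And>A. card A \<noteq> k \<Longrightarrow> f A = 0"
  shows "(\<Sum>A\<in>X. if card A = k then K * of_nat (f A) else 0) = K * of_nat (\<Sum>A\<in>X. f A)"
  unfolding of_nat_sum sum_distrib_left using assms by (intro sum.cong) auto

lemma fuc_long: "length w \<ge> 2 \<Longrightarrow> fuc b w = fu w"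
  unfolding fuc_def by simp

lemma WB_closed:
  fixes x :: "'a::comm_ring_1"
  assumes "finite V" "S \<noteq> Leaf"
  shows "WB x s V S = of_nat (z s V S) * x ^ two S * (1 + x) ^ (inn S)"
  using assms
proof (induction S arbitrary: V)
  case Leaf
  then show ?case by simp
next
  case (Node L u R)
  have u: "u = ()" by simp
  let ?S = "Node L () R"
  have fV: "finite V" by (rule Node.prems(1))
  show ?case
  proof (cases "card V = size ?S")
    case False
    have "WB x s V ?S = 0" unfolding WB_def by (rule sum.neutral) (use sum_sh_zero[OF False] in auto)
    moreover have "z s V ?S = 0" using False by simp
    ultimately show ?thesis unfolding u by simp
  next
    case True
    show ?thesis
    proof (cases "card V \<ge> 2")
      case False
      have "card V \<ge> 1" using True by simp
      then have c1: "card V = 1" using False by linarith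
      then obtain v where V: "V = {v}" "perms V = {[v]}" using perms_card1 fV by metis
      have "size L + size R = 0" using True c1 by simp
      then have "L = Leaf \<and> R = Leaf" by (cases L; cases R) auto
      then have LR: "L = Leaf" "R = Leaf" by auto
      have "WB x s V ?S = (if v = 0 then 1 else 0)"
        unfolding WB_def V(2) using LR by (cases s) (simp_all add: sum_bool fuc_def)
      moreover have "z s V ?S = (if v = 0 then 1 else 0)" using LR V(1) by simp
      ultimately show ?thesis using LR unfolding u by simp
    next
      case c2: True
      show ?thesis
      proof (cases "L = Leaf")
        case Lt: True
        then have Rn: "R \<noteq> Leaf" using True c2 by auto
        have cR: "card (V - {rt V b}) = size R" for b
        proof -
          have "V \<noteq> {}" using c2 by auto
          then have "rt V b \<in> V" by (rule rt_in[OF fV])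
          then show ?thesis using True Lt fV by (simp add: card_Diff_singleton)
        qed
        define KR where "KR = of_nat (h R) * x ^ two R * (1 + x) ^ (inn R + 1)"
        define G where "G = (\<lambda>b b'. \<Sum>r\<in>perms (V - {rt V b}). if sh r = R then
             (if rt V b = 0 \<and> b = (\<not> s) then x ^ tpT (Some b) (hr r) (Some b') else 0) else (0::'a))"
        have "WB x s V ?S = (\<Sum>b'\<in>UNIV. \<Sum>b\<in>UNIV. G b b')"
          unfolding WB_def Lt G_def
        proof (intro sum.cong refl, rule dec1[OF fV c2])
          fix b' b r assume r: "r \<in> perms (V - {rt V b})"
          have r': "r \<in> perms (V - {rt V b} - {})" using r by simp
          note cf = comp_facts[OF fV c2 _ _ r', of "[]"]
          have len: "length (rt V b # r) \<ge> 2" using cf(2) by (cases r) auto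
          have fu1: "fu (rt V b # r) = (\<not> b)" using cf(7) by simp
          show "(if hd (rt V b # r) = 0 \<and> fuc b' (rt V b # r) = s then x ^ tpT None (hr (rt V b # r)) (Some b') else 0) =
             (if rt V b = 0 \<and> b = (\<not> s) then x ^ tpT (Some b) (hr r) (Some b') else 0)"
          proof -
            have t: "tpT None (hr (rt V b # r)) (Some b') = tpT (Some b) (hr r) (Some b')"
              using cf(3)[of None "Some b'"] by simp
            have f: "fuc b' (rt V b # r) = (\<not> b)" using fu1 fuc_long[OF len] by simp
            show ?thesis unfolding t f list.sel(1) by (intro if_cong) auto
          qed
        qed
        also have "\<dots> = (\<Sum>b\<in>UNIV. \<Sum>b'\<in>UNIV. G b b')" by (rule sum.swap)
        also have "\<dots> = (\<Sum>b\<in>UNIV. if rt V b = 0 \<and> b = (\<not> s) then WC x b (V - {rt V b}) R else 0)"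
        proof (intro sum.cong refl)
          fix b
          show "(\<Sum>b'\<in>UNIV. G b b') = (if rt V b = 0 \<and> b = (\<not> s) then WC x b (V - {rt V b}) R else 0)"
          proof (cases "rt V b = 0 \<and> b = (\<not> s)")
            case c: True
            have "G b b' = (\<Sum>r\<in>perms (V - {rt V b}). if sh r = R then x ^ tpT (Some b) (hr r) (Some b') else 0)" for b'
              unfolding G_def by (rule sum.cong) (use c in auto)
            then have "(\<Sum>b'\<in>UNIV. G b b') = WC x b (V - {rt V b}) R"
              unfolding sum_bool WC_def sum_if_add by simp
            then show ?thesis by (metis if_P[OF c])
          next
            case c: False
            have "G b b' = 0" for b'
              unfolding G_def by (rule sum.neutral) (use c in auto)
            then have "(\<Sum>b'\<in>UNIV. G b b') = 0" by simp
            then show ?thesis by (metis if_not_P[OF c])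
          qed
        qed
        also have "\<dots> = (\<Sum>b\<in>UNIV. if rt V b = 0 \<and> b = (\<not> s) then KR else 0)"
        proof -
          have "WC x b (V - {rt V b}) R = KR" for b
            using WC_closed[OF _ Rn, of "V - {rt V b}" x b] fV cR[of b] unfolding KR_def by simp
          then show ?thesis by (simp cong: if_cong)
        qed
        also have "\<dots> = (if rt V (\<not> s) = 0 then KR else 0)"
          by (cases s) (simp_all add: sum_bool)
        finally have eq: "WB x s V ?S = (if rt V (\<not> s) = 0 then KR else 0)" .
        have "z s V ?S = (if rt V (\<not> s) = 0 then h R else 0)" using True Lt Rn by simp
        then show ?thesis using eq Lt Rn unfolding KR_def u by (simp add: mult_ac)
      next
        case Ln: False
        show ?thesis
        proof (cases "R = Leaf")
          case Rt: True
          have "WB x s V ?S = 0" unfolding WB_def Rt by (rule sum.neutral) (use dec0[OF fV c2] in auto)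
          moreover have "z s V ?S = 0" using Ln Rt by simp
          ultimately show ?thesis unfolding u by simp
        next
          case Rn: False
          define KR where "KR = of_nat (h R) * x ^ two R * (1 + x) ^ (inn R + 1)"
          define KL where "KL = x ^ two L * (1 + x) ^ (inn L)"
          define X where "X = V - {Min V, Max V}"
          define P where "P = (\<lambda>b A. \<Sum>l\<in>perms A. if sh l = L then
             (if hd l = 0 \<and> fuc b l = s then x ^ tpT None (hr l) (Some b) else 0) else (0::'a))"
          define Q where "Q = (\<lambda>b b' A. \<Sum>r\<in>perms (V - {rt V b} - A). if sh r = R then
             x * x ^ tpT (Some b) (hr r) (Some b') else (0::'a))"
          have fX: "finite X" using fV X_def by simp
          have "WB x s V ?S = (\<Sum>b'\<in>UNIV. \<Sum>b\<in>UNIV. \<Sum>A\<in>Pow X. P b A * Q b b' A)"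
            unfolding WB_def X_def P_def Q_def
          proof (intro sum.cong refl, rule dec2[OF fV c2])
            fix b' b A l r assume A: "A \<subseteq> V - {Min V, Max V}" and l: "l \<in> perms A"
              and r: "r \<in> perms (V - {rt V b} - A)" and sl: "sh l = L"
            have lne: "l \<noteq> []" using sl Ln by auto
            note cf = comp_facts[OF fV c2 A l r]
            have len: "length (l @ rt V b # r) \<ge> 2" using lne by (cases l) auto
            show "(if hd (l @ rt V b # r) = 0 \<and> fuc b' (l @ rt V b # r) = s then x ^ tpT None (hr (l @ rt V b # r)) (Some b') else 0) =
              (if hd l = 0 \<and> fuc b l = s then x ^ tpT None (hr l) (Some b) else 0) * (x * x ^ tpT (Some b) (hr r) (Some b'))"
            proof -
              have t: "tpT None (hr (l @ rt V b # r)) (Some b') = tpT None (hr l) (Some b) + 1 + tpT (Some b) (hr r) (Some b')"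
                using cf(3)[of None "Some b'"] lne by simp
              have f: "fuc b' (l @ rt V b # r) = fuc b l" using cf(7) fuc_long[OF len] lne by simp
              have hd: "hd (l @ rt V b # r) = hd l" using cf(6) lne by simp
              show ?thesis unfolding t f hd by (simp add: power_add mult_ac)
            qed
          qed
          also have "\<dots> = (\<Sum>b\<in>UNIV. \<Sum>b'\<in>UNIV. \<Sum>A\<in>Pow X. P b A * Q b b' A)"
            by (rule sum.swap)
          also have "\<dots> = (\<Sum>b\<in>UNIV. \<Sum>A\<in>Pow X. \<Sum>b'\<in>UNIV. P b A * Q b b' A)"
            by (intro sum.cong refl) (rule sum.swap)
          also have "\<dots> = (\<Sum>b\<in>UNIV. \<Sum>A\<in>Pow X. P b A * (\<Sum>b'\<in>UNIV. Q b b' A))"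
            by (simp only: sum_distrib_left)
          also have "\<dots> = (\<Sum>b\<in>UNIV. \<Sum>A\<in>Pow X. P b A * (if card A = size L then x * KR else 0))"
          proof (intro sum.cong refl)
            fix b A assume "A \<in> Pow X"
            then have A: "A \<subseteq> V - {Min V, Max V}" using X_def by simp
            have q: "Q b b' A = x * (\<Sum>r\<in>perms (V - {rt V b} - A). if sh r = R then x ^ tpT (Some b) (hr r) (Some b') else 0)" for b'
              unfolding Q_def by (rule sum_if_cmult)
            have "(\<Sum>b'\<in>UNIV. Q b b' A) = x * WC x b (V - {rt V b} - A) R"
              unfolding sum_bool q WC_def sum_if_add by (simp add: distrib_left)
            also have "\<dots> = (if card A = size L then x * KR else 0)"
              using WC_closed[OF _ Rn, of "V - {rt V b} - A" x b] fV card_cond[OF fV c2 A, of "size L" "size R" b] True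
              unfolding KR_def by auto
            finally show "P b A * (\<Sum>b'\<in>UNIV. Q b b' A) = P b A * (if card A = size L then x * KR else 0)" by simp
          qed
          also have "\<dots> = (\<Sum>A\<in>Pow X. if card A = size L then x * KR * (P True A + P False A) else 0)"
            by (rule comb2)
          also have "\<dots> = (\<Sum>A\<in>Pow X. if card A = size L then (x * KR * KL) * of_nat (z s A L) else 0)"
          proof (intro sum.cong refl)
            fix A assume "A \<in> Pow X"
            then have fA: "finite A" using fX finite_subset by auto
            have e1: "P True A + P False A = WB x s A L"
              unfolding P_def WB_def sum_bool by (rule refl)
            have e2: "WB x s A L = of_nat (z s A L) * KL"
              using Node.IH(1)[OF fA Ln] unfolding KL_def by (simp only: mult.assoc)
            show "(if card A = size L then x * KR * (P True A + P False A) else 0) =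
               (if card A = size L then (x * KR * KL) * of_nat (z s A L) else 0)"
              unfolding e1 e2 by (simp only: mult_ac)
          qed
          also have "\<dots> = (x * KR * KL) * of_nat (\<Sum>A\<in>Pow X. z s A L)"
            by (rule sum_z) (rule z_card)
          finally have eq: "WB x s V ?S = (x * KR * KL) * of_nat (\<Sum>A\<in>Pow X. z s A L)" .
          have zV: "z s V ?S = (\<Sum>A\<in>Pow X. z s A L) * h R" using True Ln Rn unfolding X_def
            by (simp add: sum_distrib_right)
          show ?thesis unfolding u zV eq KR_def KL_def using Ln Rn
            by (simp add: power_add of_nat_mult mult_ac)
        qed
      qed
    qed
  qed
qed


lemma WT_closed:
  fixes x :: "'a::comm_ring_1"
  assumes fV: "finite V" and sz: "size S \<ge> 2"
  shows "WT x s V S = of_nat (z s V S) * x ^ two S * (1 + x) ^ (inn S - 1)"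
proof (cases S)
  case Leaf
  then show ?thesis using sz by simp
next
  case (Node L u R)
  have u: "u = ()" by simp
  let ?S = "Node L () R"
  have SS: "S = ?S" using Node u by simp
  show ?thesis unfolding SS
  proof (cases "card V = size ?S")
    case False
    have "WT x s V ?S = 0" unfolding WT_def by (rule sum_sh_zero[OF False])
    moreover have "z s V ?S = 0" using False by simp
    ultimately show "WT x s V ?S = of_nat (z s V ?S) * x ^ two ?S * (1 + x) ^ (inn ?S - 1)" by simp
  next
    case True
    have c2: "card V \<ge> 2" using True sz SS by simp
    show "WT x s V ?S = of_nat (z s V ?S) * x ^ two ?S * (1 + x) ^ (inn ?S - 1)"
    proof (cases "L = Leaf")
      case Lt: True
      then have Rn: "R \<noteq> Leaf" using True c2 by auto
      have cR: "card (V - {rt V b}) = size R" for b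
      proof -
        have "V \<noteq> {}" using c2 by auto
        then have "rt V b \<in> V" by (rule rt_in[OF fV])
        then show ?thesis using True Lt fV by (simp add: card_Diff_singleton)
      qed
      define KR where "KR = of_nat (h R) * x ^ two R * (1 + x) ^ (inn R)"
      have "WT x s V ?S = (\<Sum>b\<in>UNIV. \<Sum>r\<in>perms (V - {rt V b}). if sh r = R then
             (if rt V b = 0 \<and> b = (\<not> s) then x ^ tpT (Some b) (hr r) None else 0) else 0)"
        unfolding WT_def Lt
      proof (rule dec1[OF fV c2])
        fix b r assume r: "r \<in> perms (V - {rt V b})"
        have r': "r \<in> perms (V - {rt V b} - {})" using r by simp
        note cf = comp_facts[OF fV c2 _ _ r', of "[]"]
        have fu1: "fu (rt V b # r) = (\<not> b)" using cf(7) by simp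
        have t: "tpT None (hr (rt V b # r)) None = tpT (Some b) (hr r) None"
          using cf(3)[of None None] by simp
        show "(if hd (rt V b # r) = 0 \<and> fu (rt V b # r) = s then x ^ tpT None (hr (rt V b # r)) None else 0) =
             (if rt V b = 0 \<and> b = (\<not> s) then x ^ tpT (Some b) (hr r) None else 0)"
          unfolding t fu1 list.sel(1) by (intro if_cong) auto
      qed
      also have "\<dots> = (\<Sum>b\<in>UNIV. if rt V b = 0 \<and> b = (\<not> s) then WA x b (V - {rt V b}) R else 0)"
      proof (intro sum.cong refl)
        fix b
        show "(\<Sum>r\<in>perms (V - {rt V b}). if sh r = R then
             (if rt V b = 0 \<and> b = (\<not> s) then x ^ tpT (Some b) (hr r) None else 0) else 0) =
          (if rt V b = 0 \<and> b = (\<not> s) then WA x b (V - {rt V b}) R else 0)"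
        proof (cases "rt V b = 0 \<and> b = (\<not> s)")
          case c: True
          have "(\<Sum>r\<in>perms (V - {rt V b}). if sh r = R then
             (if rt V b = 0 \<and> b = (\<not> s) then x ^ tpT (Some b) (hr r) None else 0) else 0) = WA x b (V - {rt V b}) R"
            unfolding WA_def by (rule sum.cong) (use c in auto)
          then show ?thesis by (metis if_P[OF c])
        next
          case c: False
          have "(\<Sum>r\<in>perms (V - {rt V b}). if sh r = R then
             (if rt V b = 0 \<and> b = (\<not> s) then x ^ tpT (Some b) (hr r) None else 0) else 0) = 0"
            by (rule sum.neutral) (use c in auto)
          then show ?thesis by (metis if_not_P[OF c])
        qed
      qed
      also have "\<dots> = (\<Sum>b\<in>UNIV. if rt V b = 0 \<and> b = (\<not> s) then KR else 0)"
      proof -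
        have "WA x b (V - {rt V b}) R = KR" for b
          using WA_closed[of "V - {rt V b}" x b R] fV cR[of b] unfolding KR_def by simp
        then show ?thesis by (simp cong: if_cong)
      qed
      also have "\<dots> = (if rt V (\<not> s) = 0 then KR else 0)"
        by (cases s) (simp_all add: sum_bool)
      finally have eq: "WT x s V ?S = (if rt V (\<not> s) = 0 then KR else 0)" .
      have "z s V ?S = (if rt V (\<not> s) = 0 then h R else 0)" using True Lt Rn by simp
      then show ?thesis using eq Lt Rn unfolding KR_def by (simp add: mult_ac)
    next
      case Ln: False
      show ?thesis
      proof (cases "R = Leaf")
        case Rt: True
        have "WT x s V ?S = 0" unfolding WT_def Rt by (rule dec0[OF fV c2])
        moreover have "z s V ?S = 0" using Ln Rt by simp
        ultimately show ?thesis by simp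
      next
        case Rn: False
        define KR where "KR = of_nat (h R) * x ^ two R * (1 + x) ^ (inn R)"
        define KL where "KL = x ^ two L * (1 + x) ^ (inn L)"
        define X where "X = V - {Min V, Max V}"
        define P where "P = (\<lambda>b A. \<Sum>l\<in>perms A. if sh l = L then
           (if hd l = 0 \<and> fuc b l = s then x ^ tpT None (hr l) (Some b) else 0) else (0::'a))"
        have fX: "finite X" using fV X_def by simp
        have "WT x s V ?S = (\<Sum>b\<in>UNIV. \<Sum>A\<in>Pow X. P b A *
            (\<Sum>r\<in>perms (V - {rt V b} - A). if sh r = R then x * x ^ tpT (Some b) (hr r) None else 0))"
          unfolding WT_def X_def P_def
        proof (rule dec2[OF fV c2])
          fix b A l r assume A: "A \<subseteq> V - {Min V, Max V}" and l: "l \<in> perms A"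
            and r: "r \<in> perms (V - {rt V b} - A)" and sl: "sh l = L"
          have lne: "l \<noteq> []" using sl Ln by auto
          note cf = comp_facts[OF fV c2 A l r]
          have t: "tpT None (hr (l @ rt V b # r)) None = tpT None (hr l) (Some b) + 1 + tpT (Some b) (hr r) None"
            using cf(3)[of None None] lne by simp
          have f: "fu (l @ rt V b # r) = fuc b l" using cf(7) lne by simp
          have hd: "hd (l @ rt V b # r) = hd l" using cf(6) lne by simp
          show "(if hd (l @ rt V b # r) = 0 \<and> fu (l @ rt V b # r) = s then x ^ tpT None (hr (l @ rt V b # r)) None else 0) =
            (if hd l = 0 \<and> fuc b l = s then x ^ tpT None (hr l) (Some b) else 0) * (x * x ^ tpT (Some b) (hr r) None)"
            unfolding t f hd by (simp add: power_add mult_ac)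
        qed
        also have "\<dots> = (\<Sum>b\<in>UNIV. \<Sum>A\<in>Pow X. P b A * (if card A = size L then x * KR else 0))"
        proof (intro sum.cong refl)
          fix b A assume "A \<in> Pow X"
          then have A: "A \<subseteq> V - {Min V, Max V}" using X_def by simp
          have "(\<Sum>r\<in>perms (V - {rt V b} - A). if sh r = R then x * x ^ tpT (Some b) (hr r) None else 0) =
             x * WA x b (V - {rt V b} - A) R"
            unfolding WA_def by (rule sum_if_cmult)
          also have "\<dots> = (if card A = size L then x * KR else 0)"
            using WA_closed[of "V - {rt V b} - A" x b R] fV card_cond[OF fV c2 A, of "size L" "size R" b] True
            unfolding KR_def by auto
          finally show "P b A * (\<Sum>r\<in>perms (V - {rt V b} - A). if sh r = R then x * x ^ tpT (Some b) (hr r) None else 0) =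
            P b A * (if card A = size L then x * KR else 0)" by simp
        qed
        also have "\<dots> = (\<Sum>A\<in>Pow X. if card A = size L then x * KR * (P True A + P False A) else 0)"
          by (rule comb2)
        also have "\<dots> = (\<Sum>A\<in>Pow X. if card A = size L then (x * KR * KL) * of_nat (z s A L) else 0)"
        proof (intro sum.cong refl)
          fix A assume AX: "A \<in> Pow X"
          have fA: "finite A" using AX fX by (auto intro: finite_subset)
          have e1: "P True A + P False A = WB x s A L"
            unfolding P_def WB_def sum_bool by (rule refl)
          have e2: "WB x s A L = of_nat (z s A L) * KL"
            using WB_closed[OF fA Ln, of x s] unfolding KL_def by (simp only: mult.assoc)
          show "(if card A = size L then x * KR * (P True A + P False A) else 0) =
             (if card A = size L then (x * KR * KL) * of_nat (z s A L) else 0)"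
            unfolding e1 e2 by (simp only: mult_ac)
        qed
        also have "\<dots> = (x * KR * KL) * of_nat (\<Sum>A\<in>Pow X. z s A L)"
          by (rule sum_z) (rule z_card)
        finally have eq: "WT x s V ?S = (x * KR * KL) * of_nat (\<Sum>A\<in>Pow X. z s A L)" .
        have zV: "z s V ?S = (\<Sum>A\<in>Pow X. z s A L) * h R" using True Ln Rn unfolding X_def
          by (simp add: sum_distrib_right)
        show ?thesis unfolding zV eq KR_def KL_def using Ln Rn
          by (simp add: power_add of_nat_mult mult_ac)
      qed
    qed
  qed
qed


lemma RT_closed:
  fixes x :: "'a::comm_ring_1"
  assumes "finite V" "S \<noteq> Leaf"
  shows "RT x s V S = of_nat (z s V S) * x ^ two S * (1 + x) ^ (ev 0 (ocn S))"
  using assms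
proof (induction S arbitrary: V)
  case Leaf
  then show ?case by simp
next
  case (Node L u R)
  have u: "u = ()" by simp
  let ?S = "Node L () R"
  have fV: "finite V" by (rule Node.prems(1))
  show ?case unfolding u
  proof (cases "card V = size ?S")
    case False
    have "RT x s V ?S = 0" unfolding RT_def by (rule sum_sh_zero[OF False])
    moreover have "z s V ?S = 0" using False by simp
    ultimately show "RT x s V ?S = of_nat (z s V ?S) * x ^ two ?S * (1 + x) ^ (ev 0 (ocn ?S))" by simp
  next
    case True
    show "RT x s V ?S = of_nat (z s V ?S) * x ^ two ?S * (1 + x) ^ (ev 0 (ocn ?S))"
    proof (cases "card V \<ge> 2")
      case False
      have "card V \<ge> 1" using True by simp
      then have c1: "card V = 1" using False by linarith
      then obtain v where V: "V = {v}" "perms V = {[v]}" using perms_card1 fV by metis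
      have "size L + size R = 0" using True c1 by simp
      then have "L = Leaf \<and> R = Leaf" by (cases L; cases R) auto
      then have LR: "L = Leaf" "R = Leaf" by auto
      have "RT x s V ?S = (if v = 0 then 1 else 0)"
        unfolding RT_def V(2) using LR by (simp add: node_leaf_stats)
      moreover have "z s V ?S = (if v = 0 then 1 else 0)" using LR V(1) by simp
      ultimately show ?thesis using LR by simp
    next
      case c2: True
      show ?thesis
      proof (cases "L = Leaf")
        case Lt: True
        then have Rn: "R \<noteq> Leaf" using True c2 by auto
        have cR: "card (V - {rt V b}) = size R" for b
        proof -
          have "V \<noteq> {}" using c2 by auto
          then have "rt V b \<in> V" by (rule rt_in[OF fV])
          then show ?thesis using True Lt fV by (simp add: card_Diff_singleton)
        qed
        define KR where "KR = of_nat (h R) * x ^ two R * (1 + x) ^ (ev 1 (ocn R))"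
        have "RT x s V ?S = (\<Sum>b\<in>UNIV. \<Sum>r\<in>perms (V - {rt V b}). if sh r = R then
             (if rt V b = 0 \<and> b = (\<not> s) then (if condG (Qs s) 1 (hr r) then x ^ cntN (nodeT s) (hr r) else 0) else 0) else 0)"
          unfolding RT_def Lt
        proof (rule dec1[OF fV c2])
          fix b r assume r: "r \<in> perms (V - {rt V b})"
          have r': "r \<in> perms (V - {rt V b} - {})" using r by simp
          have e1: "hr (rt V b # r) = Node Leaf (rt V b) (hr r)" using comp_facts(1)[OF fV c2 _ _ r', of "[]"] by simp
          have rne: "r \<noteq> []" using comp_facts(2)[OF fV c2 _ _ r', of "[]"] by simp
          have nt: "nodeT s (Node Leaf (rt V b) (hr r)) = (b = s)" using nodeT_comp[OF fV c2 _ _ r', of "[]"] by simp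
          show "(if hd (rt V b # r) = 0 \<and> condG (Qs s) 0 (hr (rt V b # r)) then x ^ cntN (nodeT s) (hr (rt V b # r)) else 0) =
             (if rt V b = 0 \<and> b = (\<not> s) then (if condG (Qs s) 1 (hr r) then x ^ cntN (nodeT s) (hr r) else 0) else 0)"
          proof -
            have cg: "condG (Qs s) 0 (Node Leaf (rt V b) (hr r)) = (b \<noteq> s \<and> condG (Qs s) 1 (hr r))"
              using nt rne by (simp add: Qs_def)
            have cn: "cntN (nodeT s) (Node Leaf (rt V b) (hr r)) = (if b = s then 1 else 0) + cntN (nodeT s) (hr r)"
              using nt by simp
            show ?thesis unfolding e1 cg cn list.sel(1) by (cases b; cases s) auto
          qed
        qed
        also have "\<dots> = (\<Sum>b\<in>UNIV. if rt V b = 0 \<and> b = (\<not> s) then RR x s 1 (V - {rt V b}) R else 0)"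
        proof (intro sum.cong refl)
          fix b
          show "(\<Sum>r\<in>perms (V - {rt V b}). if sh r = R then
             (if rt V b = 0 \<and> b = (\<not> s) then (if condG (Qs s) 1 (hr r) then x ^ cntN (nodeT s) (hr r) else 0) else 0) else 0) =
            (if rt V b = 0 \<and> b = (\<not> s) then RR x s 1 (V - {rt V b}) R else 0)"
          proof (cases "rt V b = 0 \<and> b = (\<not> s)")
            case c: True
            have "(\<Sum>r\<in>perms (V - {rt V b}). if sh r = R then
               (if rt V b = 0 \<and> b = (\<not> s) then (if condG (Qs s) 1 (hr r) then x ^ cntN (nodeT s) (hr r) else 0) else 0) else 0) =
               RR x s 1 (V - {rt V b}) R"
              unfolding RR_def by (rule sum.cong) (use c in auto)
            then show ?thesis by (metis if_P[OF c])
          next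
            case c: False
            have "(\<Sum>r\<in>perms (V - {rt V b}). if sh r = R then
               (if rt V b = 0 \<and> b = (\<not> s) then (if condG (Qs s) 1 (hr r) then x ^ cntN (nodeT s) (hr r) else 0) else 0) else 0) = 0"
              by (rule sum.neutral) (use c in auto)
            then show ?thesis by (metis if_not_P[OF c])
          qed
        qed
        also have "\<dots> = (\<Sum>b\<in>UNIV. if rt V b = 0 \<and> b = (\<not> s) then KR else 0)"
        proof -
          have "RR x s 1 (V - {rt V b}) R = KR" for b
            using RR_closed[of "V - {rt V b}" x s 1 R] fV cR[of b] unfolding KR_def by simp
          then show ?thesis by (simp cong: if_cong)
        qed
        also have "\<dots> = (if rt V (\<not> s) = 0 then KR else 0)"
          by (cases s) (simp_all add: sum_bool)
        finally have eq: "RT x s V ?S = (if rt V (\<not> s) = 0 then KR else 0)" .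
        have "z s V ?S = (if rt V (\<not> s) = 0 then h R else 0)" using True Lt Rn by simp
        moreover have "ocn ?S = Suc (ocn R)" using Lt Rn by simp
        ultimately show ?thesis using eq Lt Rn unfolding KR_def by (simp add: mult_ac)
      next
        case Ln: False
        show ?thesis
        proof (cases "R = Leaf")
          case Rt: True
          have "RT x s V ?S = 0" unfolding RT_def Rt by (rule dec0[OF fV c2])
          moreover have "z s V ?S = 0" using Ln Rt by simp
          ultimately show ?thesis by simp
        next
          case Rn: False
          define KR where "KR = of_nat (h R) * x ^ two R * (1 + x) ^ (ev (ocn L) (ocn R))"
          define KL where "KL = x ^ two L * (1 + x) ^ (ev 0 (ocn L))"
          define X where "X = V - {Min V, Max V}"
          define P where "P = (\<lambda>b A. \<Sum>l\<in>perms A. if sh l = L then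
             (if b = s \<and> hd l = 0 \<and> condG (Qs s) 0 (hr l) then x ^ cntN (nodeT s) (hr l) else 0) else (0::'a))"
          have fX: "finite X" using fV X_def by simp
          have "RT x s V ?S = (\<Sum>b\<in>UNIV. \<Sum>A\<in>Pow X. P b A *
             (\<Sum>r\<in>perms (V - {rt V b} - A). if sh r = R then
               (if condG (Qs s) (ocn L) (hr r) then x * x ^ cntN (nodeT s) (hr r) else 0) else 0))"
            unfolding RT_def X_def P_def
          proof (rule dec2[OF fV c2])
            fix b A l r assume A: "A \<subseteq> V - {Min V, Max V}" and l: "l \<in> perms A"
              and r: "r \<in> perms (V - {rt V b} - A)" and sl: "sh l = L"
            have lne: "l \<noteq> []" using sl Ln by auto
            note cf = comp_facts[OF fV c2 A l r]
            have nt: "nodeT s (Node (hr l) (rt V b) (hr r)) = (b = s)" using nodeT_comp[OF fV c2 A l r] .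
            have oc: "ocn (hr l) = ocn L" using sl ocn_sh by metis
            have hl: "hr l \<noteq> Leaf" "hr r \<noteq> Leaf" using lne cf(2) by auto
            have hd: "hd (l @ rt V b # r) = hd l" using cf(6) lne by simp
            show "(if hd (l @ rt V b # r) = 0 \<and> condG (Qs s) 0 (hr (l @ rt V b # r)) then x ^ cntN (nodeT s) (hr (l @ rt V b # r)) else 0) =
              (if b = s \<and> hd l = 0 \<and> condG (Qs s) 0 (hr l) then x ^ cntN (nodeT s) (hr l) else 0) *
              (if condG (Qs s) (ocn L) (hr r) then x * x ^ cntN (nodeT s) (hr r) else 0)"
            proof -
              have cg: "condG (Qs s) 0 (Node (hr l) (rt V b) (hr r)) =
                  (b = s \<and> condG (Qs s) 0 (hr l) \<and> condG (Qs s) (ocn L) (hr r))"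
                using nt oc hl by (simp add: Qs_def)
              have cn: "cntN (nodeT s) (Node (hr l) (rt V b) (hr r)) =
                  (if b = s then 1 else 0) + cntN (nodeT s) (hr l) + cntN (nodeT s) (hr r)"
                using nt by simp
              show ?thesis unfolding cf(1) hd cg cn by (cases b; cases s) (simp_all add: power_add mult_ac)
            qed
          qed
          also have "\<dots> = (\<Sum>b\<in>UNIV. \<Sum>A\<in>Pow X. P b A * (if card A = size L then x * KR else 0))"
          proof (intro sum.cong refl)
            fix b A assume "A \<in> Pow X"
            then have A: "A \<subseteq> V - {Min V, Max V}" using X_def by simp
            have "(\<Sum>r\<in>perms (V - {rt V b} - A). if sh r = R then
               (if condG (Qs s) (ocn L) (hr r) then x * x ^ cntN (nodeT s) (hr r) else 0) else 0) =
               x * RR x s (ocn L) (V - {rt V b} - A) R"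
              unfolding RR_def sum_distrib_left by (rule sum.cong) auto
            also have "\<dots> = (if card A = size L then x * KR else 0)"
              using RR_closed[of "V - {rt V b} - A" x s "ocn L" R] fV card_cond[OF fV c2 A, of "size L" "size R" b] True
              unfolding KR_def by auto
            finally show "P b A * (\<Sum>r\<in>perms (V - {rt V b} - A). if sh r = R then
               (if condG (Qs s) (ocn L) (hr r) then x * x ^ cntN (nodeT s) (hr r) else 0) else 0) =
              P b A * (if card A = size L then x * KR else 0)" by simp
          qed
          also have "\<dots> = (\<Sum>A\<in>Pow X. if card A = size L then x * KR * (P True A + P False A) else 0)"
            by (rule comb2)
          also have "\<dots> = (\<Sum>A\<in>Pow X. if card A = size L then (x * KR * KL) * of_nat (z s A L) else 0)"
          proof (intro sum.cong refl)
            fix A assume AX: "A \<in> Pow X"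
            have fA: "finite A" using AX fX by (auto intro: finite_subset)
            have e1: "P True A + P False A = RT x s A L"
              unfolding P_def RT_def by (cases s) (simp_all cong: if_cong)
            have e2: "RT x s A L = of_nat (z s A L) * KL"
              using Node.IH(1)[OF fA Ln] unfolding KL_def by (simp only: mult.assoc)
            show "(if card A = size L then x * KR * (P True A + P False A) else 0) =
               (if card A = size L then (x * KR * KL) * of_nat (z s A L) else 0)"
              unfolding e1 e2 by (simp only: mult_ac)
          qed
          also have "\<dots> = (x * KR * KL) * of_nat (\<Sum>A\<in>Pow X. z s A L)"
            by (rule sum_z) (rule z_card)
          finally have eq: "RT x s V ?S = (x * KR * KL) * of_nat (\<Sum>A\<in>Pow X. z s A L)" .
          have zV: "z s V ?S = (\<Sum>A\<in>Pow X. z s A L) * h R" using True Ln Rn unfolding X_def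
            by (simp add: sum_distrib_right)
          have oS: "ocn ?S = ocn L + ocn R" using Ln Rn by simp
          show ?thesis unfolding zV eq KR_def KL_def oS ev_add using Ln Rn
            by (simp add: power_add of_nat_mult mult_ac)
        qed
      qed
    qed
  qed
qed



lemma two_map[simp]: "two (map_tree f T) = two T"
  by (induction T) auto

lemma inn_map[simp]: "inn (map_tree f T) = inn T"
  by (induction T) auto

lemma hr_stats:
  "distinct w \<Longrightarrow> w \<noteq> [] \<Longrightarrow>
    length w = 2 * two (hr w) + ocn (hr w) + 1 \<and> inn (hr w) = two (hr w) + ocn (hr w)"
proof (induction "length w" arbitrary: w rule: less_induct)
  case less
  obtain l x r where d: "w = l @ x # r" "x = Min (set w) \<or> x = Max (set w)"
      "Min (set w) \<notin> set l" "Max (set w) \<notin> set l" "hr w = Node (hr l) x (hr r)"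
    using hr_dec2[OF less.prems(2)] by metis
  have dl: "distinct l" and dr: "distinct r" using less.prems(1) d(1) by auto
  show ?case
  proof (cases "length w \<ge> 2")
    case False
    then have "l = [] \<and> r = []" using d(1) by (cases l; cases r) auto
    then show ?thesis using d by simp
  next
    case True
    note df = dec_facts[OF less.prems(1) d(1-4) True]
    have IHr: "length r = 2 * two (hr r) + ocn (hr r) + 1 \<and> inn (hr r) = two (hr r) + ocn (hr r)"
      using less.hyps[of r] d(1) dr df(1) by simp
    show ?thesis
    proof (cases "l = []")
      case True
      then show ?thesis using d(1,5) IHr df(1) by simp
    next
      case False
      have IHl: "length l = 2 * two (hr l) + ocn (hr l) + 1 \<and> inn (hr l) = two (hr l) + ocn (hr l)"
        using less.hyps[of l] d(1) dl False by simp
      then show ?thesis using d(1,5) IHr IHl df(1) False by simp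
    qed
  qed
qed

lemma sum_sh_none:
  assumes "\<forall>w\<in>perms V. sh w \<noteq> S"
  shows "(\<Sum>w\<in>perms V. if sh w = S then F w else (0::'a::comm_monoid_add)) = 0"
  using assms by (intro sum.neutral) auto

lemma shape_id:
  fixes x :: "'a::comm_ring_1"
  assumes fV: "finite V" and cV: "card V = n + 1" and n2: "n \<ge> 2"
  shows "WT x s V S = (1 + x) ^ ((n - 1) div 2) * RT x s V S"
proof (cases "\<exists>w\<in>perms V. sh w = S")
  case False
  then have "WT x s V S = 0" "RT x s V S = 0" unfolding WT_def RT_def
    by (simp_all add: sum_sh_none)
  then show ?thesis by simp
next
  case True
  then obtain w where w: "w \<in> perms V" "sh w = S" by auto
  have dw: "distinct w" and lw: "length w = n + 1" using w(1) length_perms[OF w(1)] cV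
    unfolding perms_def by auto
  then have wne: "w \<noteq> []" by auto
  note st = hr_stats[OF dw wne]
  have sS: "size S = n + 1" and tS: "two S = two (hr w)" and oS: "ocn S = ocn (hr w)"
    and iS: "inn S = inn (hr w)"
    using w(2) lw unfolding sh_def by auto
  have SL: "S \<noteq> Leaf" using sS by auto
  have e: "inn S - 1 = (n - 1) div 2 + ev 0 (ocn S)"
    using st lw tS oS iS n2 unfolding ev_0 by simp
  have "WT x s V S = of_nat (z s V S) * x ^ two S * (1 + x) ^ (inn S - 1)"
  proof -
    have "size S \<ge> 2" using sS n2 by simp
    then show ?thesis by (rule WT_closed[OF fV])
  qed
  also have "\<dots> = (1 + x) ^ ((n - 1) div 2) * (of_nat (z s V S) * x ^ two S * (1 + x) ^ (ev 0 (ocn S)))"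
    unfolding e power_add by (simp add: mult_ac)
  also have "\<dots> = (1 + x) ^ ((n - 1) div 2) * RT x s V S"
    by (simp only: RT_closed[OF fV SL])
  finally show ?thesis .
qed


lemma D_signed: "\<pi> \<in> D_perms n \<Longrightarrow> \<pi> \<in> signed_perms n"
  unfolding D_perms_def by simp

lemma D_distinct: "\<pi> \<in> D_perms n \<Longrightarrow> distinct (0 # \<pi>)"
  using signed_perms_distinct D_signed by blast

lemma D_len: "\<pi> \<in> D_perms n \<Longrightarrow> length \<pi> = n"
  unfolding D_perms_def signed_perms_def by simp

lemma finite_D: "finite (D_perms n)"
proof -
  have "D_perms n \<subseteq> {\<pi>. set \<pi> \<subseteq> {- int n..int n} \<and> length \<pi> = n}"
  proof
    fix \<pi> assume p: "\<pi> \<in> D_perms n"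
    then have s: "set (map abs \<pi>) = int ` {1..n}" and l: "length \<pi> = n"
      unfolding D_perms_def signed_perms_def by auto
    have "set \<pi> \<subseteq> {- int n..int n}"
    proof
      fix v assume "v \<in> set \<pi>"
      then have "\<bar>v\<bar> \<in> int ` {1..n}" using s by force
      then show "v \<in> {- int n..int n}" by auto
    qed
    then show "\<pi> \<in> {\<pi>. set \<pi> \<subseteq> {- int n..int n} \<and> length \<pi> = n}" using l by simp
  qed
  then show ?thesis using finite_lists_length_eq[of "{- int n..int n}" n] finite_subset by blast
qed

lemma neg_card: "distinct \<pi> \<Longrightarrow> length (filter (\<lambda>v. v < 0) \<pi>) = card {a \<in> set \<pi>. a < (0::int)}"
  by (rule length_filter_distinct)

lemma D_closed:
  assumes p0: "\<pi>0 \<in> D_perms n" and d: "distinct (0 # \<pi>)" and st: "set (0 # \<pi>) = set (0 # \<pi>0)"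
  shows "\<pi> \<in> D_perms n"
proof -
  have d0: "distinct (0 # \<pi>0)" using D_distinct[OF p0] .
  have a1: "set \<pi> = set (0 # \<pi>) - {0}" using d by auto
  have a2: "set \<pi>0 = set (0 # \<pi>0) - {0}" using d0 by auto
  have sp: "set \<pi> = set \<pi>0" by (subst a1, subst a2, subst st) (rule refl)
  have "length \<pi> = card (set \<pi>)" using d by (simp add: distinct_card)
  also have "\<dots> = card (set \<pi>0)" using sp by simp
  also have "\<dots> = length \<pi>0" using d0 by (simp add: distinct_card)
  also have "\<dots> = n" using D_len[OF p0] .
  finally have l: "length \<pi> = n" .
  have "set (map abs \<pi>) = set (map abs \<pi>0)" using sp by simp
  then have sa: "set (map abs \<pi>) = int ` {1..n}" using p0 unfolding D_perms_def signed_perms_def by simp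
  have "length (filter (\<lambda>v. v < 0) \<pi>) = length (filter (\<lambda>v. v < 0) \<pi>0)"
    using neg_card[of \<pi>] neg_card[of \<pi>0] d d0 sp by simp
  then show ?thesis using p0 l sa unfolding D_perms_def signed_perms_def by simp
qed

lemma sum_D_group:
  fixes g :: "int list \<Rightarrow> 'a::comm_monoid_add"
  shows "(\<Sum>\<pi>\<in>D_perms n. g (0 # \<pi>)) =
    (\<Sum>V\<in>(\<lambda>\<pi>. set (0 # \<pi>)) ` D_perms n. \<Sum>w\<in>perms V. if hd w = 0 then g w else 0)"
proof -
  have "(\<Sum>\<pi>\<in>D_perms n. g (0 # \<pi>)) = (\<Sum>V\<in>(\<lambda>\<pi>. set (0 # \<pi>)) ` D_perms n.
      \<Sum>\<pi>\<in>{\<pi> \<in> D_perms n. set (0 # \<pi>) = V}. g (0 # \<pi>))"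
    by (rule sum.image_gen[OF finite_D])
  also have "\<dots> = (\<Sum>V\<in>(\<lambda>\<pi>. set (0 # \<pi>)) ` D_perms n. \<Sum>w\<in>perms V. if hd w = 0 then g w else 0)"
  proof (rule sum.cong[OF refl])
    fix V assume "V \<in> (\<lambda>\<pi>. set (0 # \<pi>)) ` D_perms n"
    then obtain \<pi>0 where p0: "\<pi>0 \<in> D_perms n" and V: "V = set (0 # \<pi>0)" by auto
    have fV: "finite V" using V by simp
    have e1: "{\<pi> \<in> D_perms n. set (0 # \<pi>) = V} = {\<pi>. distinct (0 # \<pi>) \<and> set (0 # \<pi>) = V}"
      using D_closed[OF p0] D_distinct V by blast
    have e2: "{w \<in> perms V. hd w = 0} = Cons 0 ` {\<pi>. distinct (0 # \<pi>) \<and> set (0 # \<pi>) = V}"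
    proof (rule set_eqI)
      fix w
      show "w \<in> {w \<in> perms V. hd w = 0} \<longleftrightarrow> w \<in> Cons 0 ` {\<pi>. distinct (0 # \<pi>) \<and> set (0 # \<pi>) = V}"
      proof
        assume w: "w \<in> {w \<in> perms V. hd w = 0}"
        then have "w \<noteq> []" using V unfolding perms_def by auto
        then have "w = 0 # tl w" using w by (cases w) auto
        then show "w \<in> Cons 0 ` {\<pi>. distinct (0 # \<pi>) \<and> set (0 # \<pi>) = V}"
          using w unfolding perms_def by (metis (mono_tags, lifting) image_eqI mem_Collect_eq)
      next
        assume "w \<in> Cons 0 ` {\<pi>. distinct (0 # \<pi>) \<and> set (0 # \<pi>) = V}"
        then show "w \<in> {w \<in> perms V. hd w = 0}" unfolding perms_def by auto
      qed
    qed
    have "(\<Sum>\<pi>\<in>{\<pi> \<in> D_perms n. set (0 # \<pi>) = V}. g (0 # \<pi>)) =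
        (\<Sum>\<pi>\<in>{\<pi>. distinct (0 # \<pi>) \<and> set (0 # \<pi>) = V}. g (0 # \<pi>))" unfolding e1 ..
    also have "\<dots> = (\<Sum>w\<in>Cons 0 ` {\<pi>. distinct (0 # \<pi>) \<and> set (0 # \<pi>) = V}. g w)"
      by (rule sum.reindex[symmetric, unfolded comp_def]) (auto intro: inj_onI)
    also have "\<dots> = (\<Sum>w\<in>{w \<in> perms V. hd w = 0}. g w)" unfolding e2 ..
    also have "\<dots> = (\<Sum>w\<in>perms V. if hd w = 0 then g w else 0)"
      by (rule sum.inter_filter[OF finite_perms[OF fV]])
    finally show "(\<Sum>\<pi>\<in>{\<pi> \<in> D_perms n. set (0 # \<pi>) = V}. g (0 # \<pi>)) =
        (\<Sum>w\<in>perms V. if hd w = 0 then g w else 0)" .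
  qed
  finally show ?thesis .
qed

lemma sum_sh_group:
  assumes fV: "finite V"
  shows "(\<Sum>w\<in>perms V. F w) = (\<Sum>S\<in>sh ` perms V. \<Sum>w\<in>perms V. if sh w = S then F w else (0::'a::comm_monoid_add))"
proof -
  have "(\<Sum>w\<in>perms V. F w) = (\<Sum>S\<in>sh ` perms V. \<Sum>w\<in>{w \<in> perms V. sh w = S}. F w)"
    by (rule sum.image_gen[OF finite_perms[OF fV]])
  also have "\<dots> = (\<Sum>S\<in>sh ` perms V. \<Sum>w\<in>perms V. if sh w = S then F w else 0)"
    by (intro sum.cong refl sum.inter_filter finite_perms fV)
  finally show ?thesis .
qed

lemma V_props:
  assumes "V \<in> (\<lambda>\<pi>. set (0 # \<pi>)) ` D_perms n"
  shows "finite V" "card V = n + 1"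
proof -
  obtain \<pi> where p: "\<pi> \<in> D_perms n" "V = set (0 # \<pi>)" using assms by auto
  show "finite V" using p by simp
  show "card V = n + 1" using p D_distinct[OF p(1)] D_len[OF p(1)] by (simp add: distinct_card)
qed

lemma main_s:
  fixes x :: "'a::comm_ring_1"
  assumes n2: "n \<ge> 2"
  shows "(\<Sum>\<pi>\<in>D_perms n. if fu (0 # \<pi>) = s then x ^ runB \<pi> else 0) =
    (1 + x) ^ ((n - 1) div 2) * (\<Sum>\<pi>\<in>D_perms n. if condG (Qs s) 0 (hr (0 # \<pi>))
       then x ^ (cntN (nodeT s) (hr (0 # \<pi>)) + 1) else 0)"
proof -
  let ?m = "(n - 1) div 2"
  let ?VV = "(\<lambda>\<pi>. set (0 # \<pi>)) ` D_perms n"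
  define gL where "gL = (\<lambda>w. if fu w = s then x * x ^ tpT None (hr w) None else 0)"
  define gR where "gR = (\<lambda>w. if condG (Qs s) 0 (hr w) then x * x ^ cntN (nodeT s) (hr w) else 0)"
  have L1: "(\<Sum>\<pi>\<in>D_perms n. if fu (0 # \<pi>) = s then x ^ runB \<pi> else 0) = (\<Sum>\<pi>\<in>D_perms n. gL (0 # \<pi>))"
  proof (rule sum.cong[OF refl])
    fix \<pi> assume "\<pi> \<in> D_perms n"
    then have "runB \<pi> = 1 + tpT None (hr (0 # \<pi>)) None" using runB_tpT D_distinct by blast
    then show "(if fu (0 # \<pi>) = s then x ^ runB \<pi> else 0) = gL (0 # \<pi>)" unfolding gL_def by simp
  qed
  have R1: "(\<Sum>\<pi>\<in>D_perms n. if condG (Qs s) 0 (hr (0 # \<pi>)) then x ^ (cntN (nodeT s) (hr (0 # \<pi>)) + 1) else 0) =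
      (\<Sum>\<pi>\<in>D_perms n. gR (0 # \<pi>))"
    unfolding gR_def by (rule sum.cong[OF refl]) simp
  have perV: "(\<Sum>w\<in>perms V. if hd w = 0 then gL w else 0) = (1 + x) ^ ?m * (\<Sum>w\<in>perms V. if hd w = 0 then gR w else 0)"
    if V: "V \<in> ?VV" for V
  proof -
    note vp = V_props[OF V]
    have "(\<Sum>w\<in>perms V. if hd w = 0 then gL w else 0) =
        (\<Sum>S\<in>sh ` perms V. \<Sum>w\<in>perms V. if sh w = S then (if hd w = 0 then gL w else 0) else 0)"
      by (rule sum_sh_group[OF vp(1)])
    also have "\<dots> = (\<Sum>S\<in>sh ` perms V. x * WT x s V S)"
      unfolding WT_def gL_def sum_distrib_left by (intro sum.cong refl) auto
    also have "\<dots> = (\<Sum>S\<in>sh ` perms V. x * ((1 + x) ^ ?m * RT x s V S))"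
      by (simp add: shape_id[OF vp n2])
    also have "\<dots> = (1 + x) ^ ?m * (\<Sum>S\<in>sh ` perms V. x * RT x s V S)"
      by (simp add: sum_distrib_left mult_ac)
    also have "(\<Sum>S\<in>sh ` perms V. x * RT x s V S) =
        (\<Sum>S\<in>sh ` perms V. \<Sum>w\<in>perms V. if sh w = S then (if hd w = 0 then gR w else 0) else 0)"
      unfolding RT_def gR_def sum_distrib_left by (intro sum.cong refl) auto
    also have "\<dots> = (\<Sum>w\<in>perms V. if hd w = 0 then gR w else 0)"
      by (rule sum_sh_group[OF vp(1), symmetric])
    finally show ?thesis .
  qed
  have "(\<Sum>\<pi>\<in>D_perms n. gL (0 # \<pi>)) = (\<Sum>V\<in>?VV. \<Sum>w\<in>perms V. if hd w = 0 then gL w else 0)"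
    by (rule sum_D_group)
  also have "\<dots> = (\<Sum>V\<in>?VV. (1 + x) ^ ?m * (\<Sum>w\<in>perms V. if hd w = 0 then gR w else 0))"
    using perV by (rule sum.cong[OF refl])
  also have "\<dots> = (1 + x) ^ ?m * (\<Sum>V\<in>?VV. \<Sum>w\<in>perms V. if hd w = 0 then gR w else 0)"
    by (simp add: sum_distrib_left)
  also have "(\<Sum>V\<in>?VV. \<Sum>w\<in>perms V. if hd w = 0 then gR w else 0) = (\<Sum>\<pi>\<in>D_perms n. gR (0 # \<pi>))"
    by (rule sum_D_group[symmetric])
  finally show ?thesis using L1 R1 by simp
qed


lemma fu_hd: "\<pi> \<noteq> [] \<Longrightarrow> fu (0 # \<pi>) = (hd \<pi> > 0)"
  unfolding fu_def by (cases \<pi>) auto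

lemma D_ne: "n \<ge> 1 \<Longrightarrow> \<pi> \<in> D_perms n \<Longrightarrow> \<pi> \<noteq> []"
  using D_len by fastforce

lemma D_hd_ne0: "n \<ge> 1 \<Longrightarrow> \<pi> \<in> D_perms n \<Longrightarrow> hd \<pi> \<noteq> 0"
proof -
  assume n: "n \<ge> 1" and p: "\<pi> \<in> D_perms n"
  have "\<pi> \<noteq> []" using D_ne[OF n p] .
  then have "hd \<pi> \<in> set \<pi>" by simp
  moreover have "0 \<notin> set \<pi>" using D_distinct[OF p] by simp
  ultimately show ?thesis by auto
qed

lemma RD_pos_eq:
  assumes "n \<ge> 1"
  shows "RD_pos n x = (\<Sum>\<pi>\<in>D_perms n. if fu (0 # \<pi>) = True then x ^ runB \<pi> else 0)"
proof -
  have "RD_pos n x = (\<Sum>\<pi>\<in>D_perms n. if hd \<pi> > 0 then x ^ runB \<pi> else 0)"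
    unfolding RD_pos_def by (rule sum.inter_filter[OF finite_D])
  also have "\<dots> = (\<Sum>\<pi>\<in>D_perms n. if fu (0 # \<pi>) = True then x ^ runB \<pi> else 0)"
    using fu_hd D_ne[OF assms] by (intro sum.cong refl) simp
  finally show ?thesis .
qed

lemma RD_neg_eq:
  assumes "n \<ge> 1"
  shows "RD_neg n x = (\<Sum>\<pi>\<in>D_perms n. if fu (0 # \<pi>) = False then x ^ runB \<pi> else 0)"
proof -
  have "RD_neg n x = (\<Sum>\<pi>\<in>D_perms n. if hd \<pi> < 0 then x ^ runB \<pi> else 0)"
    unfolding RD_neg_def by (rule sum.inter_filter[OF finite_D])
  also have "\<dots> = (\<Sum>\<pi>\<in>D_perms n. if fu (0 # \<pi>) = False then x ^ runB \<pi> else 0)"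
  proof (intro sum.cong refl)
    fix \<pi> assume p: "\<pi> \<in> D_perms n"
    have "hd \<pi> < 0 \<longleftrightarrow> \<not> fu (0 # \<pi>)"
      using fu_hd[OF D_ne[OF assms p]] D_hd_ne0[OF assms p] by auto
    then show "(if hd \<pi> < 0 then x ^ runB \<pi> else 0) = (if fu (0 # \<pi>) = False then x ^ runB \<pi> else 0)"
      by simp
  qed
  finally show ?thesis .
qed

lemma RD_split: "n \<ge> 1 \<Longrightarrow> RD n x = RD_pos n x + RD_neg n x"
  unfolding RD_pos_eq RD_neg_eq RD_def sum.distrib[symmetric]
  by (intro sum.cong refl) auto

lemma BHR_cond:
  assumes d: "distinct (inorder T)"
  shows "((\<forall>s\<in>tnodes T. nchildren s = 2 \<longrightarrow> nodeT b s) \<and>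
      (\<forall>s\<in>tnodes T. nodeT b s \<and> nchildren s = 1 \<longrightarrow> even_onechild T s)) = condG (Qs b) 0 T"
proof -
  have eo: "\<forall>s\<in>tnodes T. even_onechild T s = (nchildren s = 1 \<and> even (rk T (root_label s) + 1))"
  proof
    fix s assume s: "s \<in> tnodes T"
    have "root_label s \<in> set_tree T" by (rule root_in_set[OF s])
    then have "oc_rank T (root_label s) = rk T (root_label s) + 1"
      unfolding oc_rank_def using oc_rank_rk[OF d] by simp
    then show "even_onechild T s = (nchildren s = 1 \<and> even (rk T (root_label s) + 1))"
      unfolding even_onechild_def by simp
  qed
  have "((\<forall>s\<in>tnodes T. nchildren s = 2 \<longrightarrow> nodeT b s) \<and>
      (\<forall>s\<in>tnodes T. nodeT b s \<and> nchildren s = 1 \<longrightarrow> even_onechild T s)) =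
      (\<forall>s\<in>tnodes T. Qs b s (0 + rk T (root_label s)))"
    using eo unfolding Qs_def by auto
  also have "\<dots> = condG (Qs b) 0 T" by (rule condG_iff[OF d])
  finally show ?thesis .
qed

lemma even_D:
  assumes p: "\<pi> \<in> signed_perms n"
  shows "\<pi> \<in> D_perms n \<longleftrightarrow> even (card {a \<in> set_tree (hr (0 # \<pi>)). a < 0})"
proof -
  have d: "distinct (0 # \<pi>)" using signed_perms_distinct[OF p] .
  have "{a \<in> set_tree (hr (0 # \<pi>)). a < 0} = {a \<in> set \<pi>. a < 0}" by auto
  then have "card {a \<in> set_tree (hr (0 # \<pi>)). a < 0} = length (filter (\<lambda>v. v < 0) \<pi>)"
    using neg_card[of \<pi>] d by simp
  then show ?thesis using p unfolding D_perms_def by simp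
qed

lemma nodeT_True: "nodeT True = is_max_node" by (rule ext) (simp add: nodeT_def)
lemma nodeT_False: "nodeT False = is_min_node" by (rule ext) (simp add: nodeT_def)

lemma DHR_img:
  assumes "\<And>T. T \<in> DH \<longleftrightarrow> T \<in> BHR n \<and> (\<forall>s\<in>tnodes T. nchildren s = 2 \<longrightarrow> nodeT b s) \<and>
      (\<forall>s\<in>tnodes T. nodeT b s \<and> nchildren s = 1 \<longrightarrow> even_onechild T s) \<and>
      even (card {a \<in> set_tree T. a < 0})"
  shows "DH = (\<lambda>\<pi>. hr (0 # \<pi>)) ` {\<pi> \<in> D_perms n. condG (Qs b) 0 (hr (0 # \<pi>))}"
proof (rule set_eqI)
  fix T
  show "T \<in> DH \<longleftrightarrow> T \<in> (\<lambda>\<pi>. hr (0 # \<pi>)) ` {\<pi> \<in> D_perms n. condG (Qs b) 0 (hr (0 # \<pi>))}"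
  proof
    assume T: "T \<in> DH"
    then have "T \<in> BHR n" using assms by simp
    then obtain \<pi> where p: "\<pi> \<in> signed_perms n" and Tp: "T = hr (0 # \<pi>)" unfolding BHR_eq by auto
    have d: "distinct (inorder T)" using signed_perms_distinct[OF p] Tp by simp
    have "condG (Qs b) 0 T" using T assms BHR_cond[OF d, of b] by simp
    moreover have "\<pi> \<in> D_perms n" using T assms even_D[OF p] Tp by simp
    ultimately show "T \<in> (\<lambda>\<pi>. hr (0 # \<pi>)) ` {\<pi> \<in> D_perms n. condG (Qs b) 0 (hr (0 # \<pi>))}"
      using Tp by auto
  next
    assume "T \<in> (\<lambda>\<pi>. hr (0 # \<pi>)) ` {\<pi> \<in> D_perms n. condG (Qs b) 0 (hr (0 # \<pi>))}"
    then obtain \<pi> where p: "\<pi> \<in> D_perms n" and c: "condG (Qs b) 0 (hr (0 # \<pi>))" and Tp: "T = hr (0 # \<pi>)"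
      by auto
    have ps: "\<pi> \<in> signed_perms n" using D_signed[OF p] .
    have d: "distinct (inorder T)" using signed_perms_distinct[OF ps] Tp by simp
    have "T \<in> BHR n" unfolding BHR_eq using ps Tp by auto
    moreover have "(\<forall>s\<in>tnodes T. nchildren s = 2 \<longrightarrow> nodeT b s) \<and>
      (\<forall>s\<in>tnodes T. nodeT b s \<and> nchildren s = 1 \<longrightarrow> even_onechild T s)"
      using BHR_cond[OF d, of b] c Tp by simp
    moreover have "even (card {a \<in> set_tree T. a < 0})" using even_D[OF ps] p Tp by simp
    ultimately show "T \<in> DH" using assms by simp
  qed
qed

lemma sum_DHR:
  fixes x :: "'a::comm_ring_1"
  assumes DH: "DH = (\<lambda>\<pi>. hr (0 # \<pi>)) ` {\<pi> \<in> D_perms n. condG (Qs b) 0 (hr (0 # \<pi>))}"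
    and cnt: "\<And>T. distinct (inorder T) \<Longrightarrow> f T = cntN (nodeT b) T"
  shows "(\<Sum>T\<in>DH. x ^ (f T + 1)) = (\<Sum>\<pi>\<in>D_perms n. if condG (Qs b) 0 (hr (0 # \<pi>))
       then x ^ (cntN (nodeT b) (hr (0 # \<pi>)) + 1) else 0)"
proof -
  have inj: "inj_on (\<lambda>\<pi>. hr (0 # \<pi>)) {\<pi> \<in> D_perms n. condG (Qs b) 0 (hr (0 # \<pi>))}"
  proof (rule inj_onI)
    fix p q assume "hr (0 # p) = hr (0 # q)"
    then have "inorder (hr (0 # p)) = inorder (hr (0 # q))" by simp
    then show "p = q" by simp
  qed
  have "(\<Sum>T\<in>DH. x ^ (f T + 1)) = (\<Sum>\<pi>\<in>{\<pi> \<in> D_perms n. condG (Qs b) 0 (hr (0 # \<pi>))}. x ^ (f (hr (0 # \<pi>)) + 1))"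
    unfolding DH by (rule sum.reindex[OF inj, unfolded comp_def])
  also have "\<dots> = (\<Sum>\<pi>\<in>{\<pi> \<in> D_perms n. condG (Qs b) 0 (hr (0 # \<pi>))}. x ^ (cntN (nodeT b) (hr (0 # \<pi>)) + 1))"
  proof (rule sum.cong[OF refl])
    fix \<pi> assume "\<pi> \<in> {\<pi> \<in> D_perms n. condG (Qs b) 0 (hr (0 # \<pi>))}"
    then have "\<pi> \<in> D_perms n" by simp
    then have "distinct (inorder (hr (0 # \<pi>)))" using D_distinct[of \<pi> n] by simp
    then show "x ^ (f (hr (0 # \<pi>)) + 1) = x ^ (cntN (nodeT b) (hr (0 # \<pi>)) + 1)" using cnt by simp
  qed
  also have "\<dots> = (\<Sum>\<pi>\<in>D_perms n. if condG (Qs b) 0 (hr (0 # \<pi>)) then x ^ (cntN (nodeT b) (hr (0 # \<pi>)) + 1) else 0)"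
    by (rule sum.inter_filter[OF finite_D])
  finally show ?thesis .
qed

theorem mainTheorem19:
  fixes n :: nat and x :: "'a::comm_ring_1"
  assumes "n \<ge> 2"
  defines "m \<equiv> (n - 1) div 2"
  shows "RD_pos n x = (1 + x) ^ m * (\<Sum>T\<in>DHR_plus n. x ^ (max_count T + 1))
       \<and> RD_neg n x = (1 + x) ^ m * (\<Sum>T\<in>DHR_minus n. x ^ (min_count T + 1))
       \<and> RD n x = (1 + x) ^ m * ((\<Sum>T\<in>DHR_plus n. x ^ (max_count T + 1))
                                 + (\<Sum>T\<in>DHR_minus n. x ^ (min_count T + 1)))"
proof -
  have n1: "n \<ge> 1" using assms(1) by simp
  have DP: "DHR_plus n = (\<lambda>\<pi>. hr (0 # \<pi>)) ` {\<pi> \<in> D_perms n. condG (Qs True) 0 (hr (0 # \<pi>))}"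
    by (rule DHR_img) (simp add: DHR_plus_def BHR_plus_def nodeT_True conj_assoc)
  have DM: "DHR_minus n = (\<lambda>\<pi>. hr (0 # \<pi>)) ` {\<pi> \<in> D_perms n. condG (Qs False) 0 (hr (0 # \<pi>))}"
    by (rule DHR_img) (simp add: DHR_minus_def BHR_minus_def nodeT_False conj_assoc)
  have SP: "(\<Sum>T\<in>DHR_plus n. x ^ (max_count T + 1)) = (\<Sum>\<pi>\<in>D_perms n. if condG (Qs True) 0 (hr (0 # \<pi>))
       then x ^ (cntN (nodeT True) (hr (0 # \<pi>)) + 1) else 0)"
    by (rule sum_DHR[OF DP]) (simp add: max_count_def card_tnodes nodeT_True)
  have SM: "(\<Sum>T\<in>DHR_minus n. x ^ (min_count T + 1)) = (\<Sum>\<pi>\<in>D_perms n. if condG (Qs False) 0 (hr (0 # \<pi>))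
       then x ^ (cntN (nodeT False) (hr (0 # \<pi>)) + 1) else 0)"
    by (rule sum_DHR[OF DM]) (simp add: min_count_def card_tnodes nodeT_False)
  have P: "RD_pos n x = (1 + x) ^ m * (\<Sum>T\<in>DHR_plus n. x ^ (max_count T + 1))"
    unfolding RD_pos_eq[OF n1] SP m_def by (rule main_s[OF assms(1)])
  have M: "RD_neg n x = (1 + x) ^ m * (\<Sum>T\<in>DHR_minus n. x ^ (min_count T + 1))"
    unfolding RD_neg_eq[OF n1] SM m_def by (rule main_s[OF assms(1)])
  show ?thesis using P M by (simp add: RD_split[OF n1] distrib_left)
qed

end
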